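(* Let $a,b,c$ be signed indices (each a positive integer, possibly barred) with $|a|+|b|+|c|=w\ge 4$. If $(a,b)\ne(1,1)$ (with both unbarred), then $\zeta_\sqcup(a,b,c)=\zeta_*(a,b,c)$. Further, if $c=w-2$ or $c=\overline{w-2}$, then $$\zeta_\sqcup(1,1,c)=\zeta_*(1,1,c)+\tfrac12\zeta(2)\zeta(c).$$
   Context: Signed indices: a positive integer $s$ or a barred one $\bar s$, with $|s|=|\bar s|=s$. For signed indices, $\zeta(s_1,\dots,s_d)$ denotes the Euler sum $\sum_{n_1>\dots>n_d>0}\frac{z_1^{n_1}\cdots z_d^{n_d}}{n_1^{|s_1|}\cdots n_d^{|s_d|}}$ with $z_j=-1$ if $s_j$ is barred and $z_j=1$ otherwise; it converges iff $s_1\ne 1$ (unbarred). Regularized values: the truncated sum $\zeta^{(M)}$ (same sum restricted to $M\ge n_1$) has, as $M\to\infty$, an expansion $P(\log M+\gamma)+o(1)$ with $P$ a polynomial ($\gamma$ Euler's constant); $\zeta_*:=P(T)\in\mathbb{R}[T]$. With $a_k=\prod_{j\le k}z_j$, the iterated integral $\int_0^{1-\varepsilon}\left(\frac{dt}{t}\right)^{|s_1|-1}\frac{dt}{a_1-t}\cdots\left(\frac{dt}{t}\right)^{|s_d|-1}\frac{dt}{a_d-t}$ (over $1-\varepsilon>t_1>t_2>\dots>0$, forms read left to right) has, as $\varepsilon\to0^+$, an expansion $Q(-\log\varepsilon)+o(1)$ with $Q$ a polynomial; $\zeta_\sqcup:=Q(T)$. Both equal the Euler sum for convergent indices. *)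

theory Defs
  imports "HOL-Analysis.Analysis" "HOL-Computational_Algebra.Polynomial"
begin

text \<open>A signed index is a pair (s, barred) with s a positive integer;
  barred = True means the index is barred. |(s,b)| = s.\<close>
type_synonym sidx = "nat \<times> bool"

definition sidx_ok :: "sidx \<Rightarrow> bool" where
  "sidx_ok s \<longleftrightarrow> fst s \<ge> 1"

definition zsgn :: "sidx \<Rightarrow> real" where
  "zsgn s = (if snd s then -1 else 1)"

text \<open>Truncated Euler sum: sum over M >= n1 > n2 > ... > nd > 0.\<close>
fun zeta_trunc :: "sidx list \<Rightarrow> nat \<Rightarrow> real" where
  "zeta_trunc [] M = 1"
| "zeta_trunc (s # ss) M =
     (\<Sum>n=1..M. zsgn s ^ n / real n ^ fst s * zeta_trunc ss (n - 1))"

definition euler_sum :: "sidx list \<Rightarrow> real" where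
  "euler_sum ss = lim (\<lambda>M. zeta_trunc ss M)"

definition zeta_star :: "sidx list \<Rightarrow> real poly" where
  "zeta_star ss = (THE P. ((\<lambda>M. zeta_trunc ss M - poly P (ln (real M) + euler_mascheroni))
                           \<longlongrightarrow> 0) sequentially)"

text \<open>Iterated integral over x > t1 > t2 > ... > 0 of forms f1(t1)dt1 ... (read left to right).\<close>
fun iter_int :: "(real \<Rightarrow> real) list \<Rightarrow> real \<Rightarrow> real" where
  "iter_int [] x = 1"
| "iter_int (f # fs) x = integral {0..x} (\<lambda>t. f t * iter_int fs t)"

text \<open>The list of forms (dt/t)^(|s1|-1) dt/(a1-t) ... (dt/t)^(|sd|-1) dt/(ad-t),
  a_k = z_1 ... z_k; the argument a is the running product.\<close>
fun forms_aux :: "real \<Rightarrow> sidx list \<Rightarrow> (real \<Rightarrow> real) list" where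
  "forms_aux a [] = []"
| "forms_aux a (s # ss) =
     replicate (fst s - 1) (\<lambda>t. 1 / t) @ [(\<lambda>t. 1 / (a * zsgn s - t))] @ forms_aux (a * zsgn s) ss"

definition forms :: "sidx list \<Rightarrow> (real \<Rightarrow> real) list" where
  "forms ss = forms_aux 1 ss"

definition zeta_sh :: "sidx list \<Rightarrow> real poly" where
  "zeta_sh ss = (THE Q. ((\<lambda>\<epsilon>. iter_int (forms ss) (1 - \<epsilon>) - poly Q (- ln \<epsilon>))
                          \<longlongrightarrow> 0) (at_right 0))"

end

theory Submission
  imports Defs
begin





definition rad :: "(nat \<Rightarrow> real) \<Rightarrow> bool" where
  "rad f \<longleftrightarrow> (\<forall>r. 0 \<le> r \<and> r < 1 \<longrightarrow> summable (\<lambda>n. \<bar>f n\<bar> * r ^ n))"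

lemma rad_summable:
  assumes "rad f" "\<bar>x\<bar> < 1"
  shows "summable (\<lambda>n. f n * x ^ n)"
proof -
  have "summable (\<lambda>n. \<bar>f n\<bar> * \<bar>x\<bar> ^ n)" using assms unfolding rad_def by auto
  then show ?thesis
    by (rule summable_comparison_test') (auto simp: abs_mult power_abs)
qed

lemma rad_comparison:
  assumes "rad f" "\<And>n. \<bar>g n\<bar> \<le> \<bar>f n\<bar>"
  shows "rad g"
  unfolding rad_def
proof safe
  fix r :: real assume r: "0 \<le> r" "r < 1"
  have "summable (\<lambda>n. \<bar>f n\<bar> * r ^ n)" using assms r unfolding rad_def by auto
  then show "summable (\<lambda>n. \<bar>g n\<bar> * r ^ n)"
    by (rule summable_comparison_test') (use assms r in \<open>auto intro!: mult_right_mono\<close>)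
qed

lemma rad_psums:
  assumes "rad f"
  shows "rad (\<lambda>N. \<Sum>n\<le>N. \<bar>f n\<bar>)"
  unfolding rad_def
proof safe
  fix r :: real assume r: "0 \<le> r" "r < 1"
  define r' where "r' = (1 + r) / 2"
  have r': "r \<le> r'" "r' < 1" "0 \<le> r'" using r by (auto simp: r'_def)
  have sm: "summable (\<lambda>n. \<bar>f n\<bar> * r' ^ n)" using assms r' unfolding rad_def by auto
  define S where "S = (\<Sum>n. \<bar>f n\<bar> * r' ^ n)"
  show "summable (\<lambda>N. \<bar>\<Sum>n\<le>N. \<bar>f n\<bar>\<bar> * r ^ N)"
  proof (cases "r = 0")
    case True
    then show ?thesis by (intro summable_finite[of "{0}"]) auto
  next
    case False
    then have rpos: "r > 0" using r by auto
    then have r'pos: "r' > 0" using r' by auto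
    have bnd: "\<bar>\<Sum>n\<le>N. \<bar>f n\<bar>\<bar> * r ^ N \<le> S * (r / r') ^ N" for N
    proof -
      have "\<bar>\<Sum>n\<le>N. \<bar>f n\<bar>\<bar> * r ^ N = (\<Sum>n\<le>N. \<bar>f n\<bar> * r ^ N)"
        by (simp add: sum_distrib_right sum_nonneg)
      also have "\<dots> \<le> (\<Sum>n\<le>N. \<bar>f n\<bar> * r' ^ n * (r / r') ^ N)"
      proof (intro sum_mono)
        fix n assume "n \<in> {..N}"
        then have nN: "n \<le> N" by auto
        have "r' ^ N \<le> r' ^ n" using r' nN by (intro power_decreasing) auto
        then have "r ^ N \<le> r' ^ n * (r / r') ^ N"
          using r'pos rpos by (simp add: power_divide field_simps)
        then show "\<bar>f n\<bar> * r ^ N \<le> \<bar>f n\<bar> * r' ^ n * (r / r') ^ N"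
          by (simp add: mult.assoc mult_left_mono)
      qed
      also have "\<dots> = (\<Sum>n\<le>N. \<bar>f n\<bar> * r' ^ n) * (r / r') ^ N"
        by (simp add: sum_distrib_right)
      also have "\<dots> \<le> S * (r / r') ^ N"
        unfolding S_def using sm r'pos rpos
        by (intro mult_right_mono sum_le_suminf) auto
      finally show ?thesis .
    qed
    have gs: "summable (\<lambda>N. S * (r / r') ^ N)"
      using r r' rpos r'pos by (intro summable_mult summable_geometric) (auto simp: r'_def)
    show ?thesis
    proof (rule summable_comparison_test'[where N=0, OF gs])
      fix N :: nat
      have "norm (\<bar>\<Sum>n\<le>N. \<bar>f n\<bar>\<bar> * r ^ N) = \<bar>\<Sum>n\<le>N. \<bar>f n\<bar>\<bar> * r ^ N"
        using rpos by simp
      then show "norm (\<bar>\<Sum>n\<le>N. \<bar>f n\<bar>\<bar> * r ^ N) \<le> S * (r / r') ^ N"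
        using bnd[of N] by linarith
    qed
  qed
qed

lemma rad_psums':
  assumes "rad f"
  shows "rad (\<lambda>N. \<Sum>n\<le>N. f n)"
  by (rule rad_comparison[OF rad_psums[OF assms]]) (auto intro: sum_abs)




lemma TL:
  assumes "rad f" "\<bar>x\<bar> < 1"
  shows "(1 - x) * (\<Sum>N. (\<Sum>n\<le>N. f n) * x ^ N) = (\<Sum>N. f N * x ^ N)"
proof -
  define S where "S N = (\<Sum>n\<le>N. f n)" for N
  have smS: "summable (\<lambda>N. S N * x ^ N)"
    unfolding S_def by (rule rad_summable[OF rad_psums'[OF assms(1)] assms(2)])
  define g where "g N = (if N = 0 then 0 else S (N - 1) * x ^ N)" for N
  have "(\<lambda>N. x * (S N * x ^ N)) sums (x * (\<Sum>N. S N * x ^ N))"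
    using smS by (intro sums_mult summable_sums)
  then have "(\<lambda>N. g (Suc N)) sums (x * (\<Sum>N. S N * x ^ N))"
    by (simp add: g_def mult_ac)
  then have gs: "g sums (x * (\<Sum>N. S N * x ^ N))"
    by (subst (asm) sums_Suc_iff) (simp add: g_def)
  have "(\<lambda>N. S N * x ^ N - g N) sums ((\<Sum>N. S N * x ^ N) - x * (\<Sum>N. S N * x ^ N))"
    by (intro sums_diff summable_sums smS gs)
  moreover have "(\<lambda>N. S N * x ^ N - g N) = (\<lambda>N. f N * x ^ N)"
  proof
    fix N show "S N * x ^ N - g N = f N * x ^ N"
      by (cases N) (simp_all add: S_def g_def algebra_simps)
  qed
  ultimately have "(\<lambda>N. f N * x ^ N) sums ((1 - x) * (\<Sum>N. S N * x ^ N))"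
    by (simp add: algebra_simps)
  then show ?thesis unfolding S_def by (simp add: sums_iff)
qed




lemma rad_deriv:
  assumes "rad h" "\<bar>t\<bar> < 1"
  shows "((\<lambda>t. \<Sum>n. h n * t ^ n) has_real_derivative (\<Sum>n. diffs h n * t ^ n)) (at t)"
  by (rule termdiffs_strong'[where K=1]) (use assms rad_summable in auto)

lemma rad_cont:
  assumes "rad h" "0 \<le> x" "x < 1"
  shows "continuous_on {0..x} (\<lambda>t. \<Sum>n. h n * t ^ n)"
proof (intro continuous_at_imp_continuous_on ballI)
  fix t assume "t \<in> {0..x}"
  then have "\<bar>t\<bar> < 1" using assms by auto
  from DERIV_isCont[OF rad_deriv[OF assms(1) this]]
  show "isCont (\<lambda>t. \<Sum>n. h n * t ^ n) t" .
qed

lemma FTC_pow: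
  assumes "rad h" "0 \<le> x" "x < 1"
    and "\<And>t. 0 < t \<Longrightarrow> t < x \<Longrightarrow> (\<Sum>n. diffs h n * t ^ n) = g t"
  shows "integral {0..x} g = (\<Sum>n. h n * x ^ n) - h 0"
proof -
  have "(g has_integral ((\<Sum>n. h n * x ^ n) - (\<Sum>n. h n * 0 ^ n))) {0..x}"
  proof (rule fundamental_theorem_of_calculus_interior)
    show "continuous_on {0..x} (\<lambda>t. \<Sum>n. h n * t ^ n)" by (rule rad_cont) (use assms in auto)
    fix t assume t: "t \<in> {0<..<x}"
    have "((\<lambda>t. \<Sum>n. h n * t ^ n) has_real_derivative g t) (at t)"
      using rad_deriv[OF assms(1), of t] assms(4)[of t] t assms by auto
    then show "((\<lambda>t. \<Sum>n. h n * t ^ n) has_vector_derivative g t) (at t)"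
      by (simp add: has_real_derivative_iff_has_vector_derivative)
  qed (use assms in auto)
  then show ?thesis by (simp add: integral_unique)
qed

lemma opT:
  assumes "rad f" "f 0 = 0" "0 \<le> x" "x < 1"
  shows "integral {0..x} (\<lambda>t. 1 / t * (\<Sum>n. f n * t ^ n)) = (\<Sum>n. (f n / real n) * x ^ n)"
    and "rad (\<lambda>n. f n / real n)"
proof -
  show rh: "rad (\<lambda>n. f n / real n)"
    by (rule rad_comparison[OF assms(1)]) (auto simp: abs_divide divide_le_eq intro!: mult_left_mono[of 1 "real n" "\<bar>f n\<bar>" for n, simplified])
  have "integral {0..x} (\<lambda>t. 1 / t * (\<Sum>n. f n * t ^ n)) = (\<Sum>n. (f n / real n) * x ^ n) - f 0 / real 0"
  proof (rule FTC_pow[OF rh assms(3,4)])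
    fix t :: real assume t: "0 < t" "t < x"
    have sm: "summable (\<lambda>n. f n * t ^ n)" using t assms by (intro rad_summable) auto
    have "diffs (\<lambda>n. f n / real n) = (\<lambda>n. f (Suc n))"
      by (auto simp: diffs_def)
    then have "(\<Sum>n. diffs (\<lambda>n. f n / real n) n * t ^ n) = (\<Sum>n. f (Suc n) * t ^ n)" by simp
    also have "\<dots> = ((\<Sum>n. f n * t ^ n) - f 0) / t"
      using powser_split_head(2)[OF sm] t by (simp add: field_simps)
    finally show "(\<Sum>n. diffs (\<lambda>n. f n / real n) n * t ^ n) = 1 / t * (\<Sum>n. f n * t ^ n)"
      using assms by simp
  qed
  then show "integral {0..x} (\<lambda>t. 1 / t * (\<Sum>n. f n * t ^ n)) = (\<Sum>n. (f n / real n) * x ^ n)"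
    by simp
qed




definition hA :: "real \<Rightarrow> (nat \<Rightarrow> real) \<Rightarrow> nat \<Rightarrow> real" where
  "hA a f N = (if N = 0 then 0 else a ^ N / real N * (\<Sum>n<N. f n * a ^ n))"

lemma sq_pm1: "a = 1 \<or> a = -1 \<Longrightarrow> a * a = (1::real)" by auto

lemma pow_pm1: "a = 1 \<or> a = -1 \<Longrightarrow> \<bar>a ^ n\<bar> = (1::real)"
  by (auto simp: power_abs)

lemma opA:
  assumes a: "a = 1 \<or> a = -1" and f: "rad f" and x: "0 \<le> x" "x < 1"
  shows "integral {0..x} (\<lambda>t. 1 / (a - t) * (\<Sum>n. f n * t ^ n)) = (\<Sum>N. hA a f N * x ^ N)"
    and "rad (hA a f)"
proof -
  show rh: "rad (hA a f)"
  proof (rule rad_comparison[OF rad_psums[OF f]])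
    fix N
    have "\<bar>hA a f N\<bar> \<le> \<bar>\<Sum>n<N. f n * a ^ n\<bar>"
      using a by (auto simp: hA_def abs_mult power_abs divide_le_eq intro!: mult_left_mono[of 1 "real N", simplified])
    also have "\<dots> \<le> (\<Sum>n<N. \<bar>f n\<bar>)"
      using a by (intro order.trans[OF sum_abs] sum_mono) (auto simp: abs_mult power_abs)
    also have "\<dots> \<le> (\<Sum>n\<le>N. \<bar>f n\<bar>)"
      by (intro sum_mono2) auto
    finally show "\<bar>hA a f N\<bar> \<le> \<bar>\<Sum>n\<le>N. \<bar>f n\<bar>\<bar>" by simp
  qed
  have "integral {0..x} (\<lambda>t. 1 / (a - t) * (\<Sum>n. f n * t ^ n)) = (\<Sum>N. hA a f N * x ^ N) - hA a f 0"
  proof (rule FTC_pow[OF rh x])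
    fix t :: real assume t: "0 < t" "t < x"
    define g where "g n = f n * a ^ n" for n
    have rg: "rad g"
      by (rule rad_comparison[OF f]) (use a in \<open>auto simp: g_def abs_mult power_abs\<close>)
    have at: "\<bar>a * t\<bar> < 1" using a t x by auto
    have TLi: "(1 - a * t) * (\<Sum>N. (\<Sum>n\<le>N. g n) * (a * t) ^ N) = (\<Sum>N. g N * (a * t) ^ N)"
      by (rule TL[OF rg at])
    have e1: "(\<lambda>N. g N * (a * t) ^ N) = (\<lambda>N. f N * t ^ N)"
    proof
      fix N
      have "a ^ N * a ^ N = 1" using a by (simp add: power_mult_distrib[symmetric] sq_pm1)
      then show "g N * (a * t) ^ N = f N * t ^ N"
        by (simp add: g_def power_mult_distrib)
    qed
    have e2: "diffs (hA a f) = (\<lambda>m. a * ((\<Sum>n\<le>m. g n) * a ^ m))"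
    proof
      fix m
      show "diffs (hA a f) m = a * ((\<Sum>n\<le>m. g n) * a ^ m)"
        by (simp add: diffs_def hA_def g_def lessThan_Suc_atMost)
    qed
    have "(\<Sum>m. diffs (hA a f) m * t ^ m) = (\<Sum>m. a * ((\<Sum>n\<le>m. g n) * (a * t) ^ m))"
      unfolding e2 by (simp add: power_mult_distrib mult_ac)
    also have "\<dots> = a * (\<Sum>m. (\<Sum>n\<le>m. g n) * (a * t) ^ m)"
      by (intro suminf_mult summable_sums rad_summable[OF rad_psums'[OF rg] at])
    also have "\<dots> = a * ((\<Sum>n. f n * t ^ n) / (1 - a * t))"
    proof -
      have ne: "1 - a * t \<noteq> 0" using at by auto
      have "(\<Sum>m. (\<Sum>n\<le>m. g n) * (a * t) ^ m) = (\<Sum>n. f n * t ^ n) / (1 - a * t)"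
        using TLi ne unfolding e1 by (simp add: eq_divide_eq mult.commute)
      then show ?thesis by simp
    qed
    also have "\<dots> = 1 / (a - t) * (\<Sum>n. f n * t ^ n)"
      using a at t x by (auto simp: field_simps)
    finally show "(\<Sum>m. diffs (hA a f) m * t ^ m) = 1 / (a - t) * (\<Sum>n. f n * t ^ n)" .
  qed
  then show "integral {0..x} (\<lambda>t. 1 / (a - t) * (\<Sum>n. f n * t ^ n)) = (\<Sum>N. hA a f N * x ^ N)"
    by (simp add: hA_def)
qed




definition coefA :: "real \<Rightarrow> sidx list \<Rightarrow> nat \<Rightarrow> real" where
  "coefA A ss N = A ^ N * (zeta_trunc ss N - (if N = 0 then 0 else zeta_trunc ss (N - 1)))"

lemma telesc: "(\<Sum>n\<le>(N::nat). (g n - (if n = 0 then 0 else g (n - 1)))) = (g N :: real)"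
  by (induction N) auto

lemma telesc': "(N::nat) \<ge> 1 \<Longrightarrow> (\<Sum>n<N. (g n - (if n = 0 then 0 else g (n - 1)))) = (g (N - 1) :: real)"
  using telesc[of g "N - 1"] by (cases N) (auto simp: lessThan_Suc_atMost)

lemma iter_rep:
  assumes "\<And>t. 0 \<le> t \<Longrightarrow> t < 1 \<Longrightarrow> iter_int fs t = (\<Sum>n. g n * t ^ n)" "rad g" "g 0 = 0"
  shows "(\<forall>t. 0 \<le> t \<and> t < 1 \<longrightarrow> iter_int (replicate j (\<lambda>t. 1 / t) @ fs) t = (\<Sum>n. (g n / real n ^ j) * t ^ n))
      \<and> rad (\<lambda>n. g n / real n ^ j)"
proof (induction j)
  case 0
  then show ?case using assms by simp
next
  case (Suc j)
  have r: "rad (\<lambda>n. g n / real n ^ j)" and e: "\<And>t. 0 \<le> t \<Longrightarrow> t < 1 \<Longrightarrow>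
      iter_int (replicate j (\<lambda>t. 1 / t) @ fs) t = (\<Sum>n. (g n / real n ^ j) * t ^ n)"
    using Suc by auto
  have z: "g 0 / real 0 ^ j = 0" using assms by simp
  have eq: "(\<lambda>n. g n / real n ^ j / real n) = (\<lambda>n. g n / real n ^ Suc j)"
    by (auto simp: field_simps)
  show ?case
  proof (intro conjI allI impI)
    fix x :: real assume x: "0 \<le> x \<and> x < 1"
    have "iter_int (replicate (Suc j) (\<lambda>t. 1 / t) @ fs) x =
        integral {0..x} (\<lambda>t. 1 / t * iter_int (replicate j (\<lambda>t. 1 / t) @ fs) t)" by simp
    also have "\<dots> = integral {0..x} (\<lambda>t. 1 / t * (\<Sum>n. (g n / real n ^ j) * t ^ n))"
      by (rule integral_cong) (use x e in auto)
    also have "\<dots> = (\<Sum>n. (g n / real n ^ j / real n) * x ^ n)"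
      by (rule opT(1)[OF r z]) (use x in auto)
    finally show "iter_int (replicate (Suc j) (\<lambda>t. 1 / t) @ fs) x = (\<Sum>n. (g n / real n ^ Suc j) * x ^ n)"
      using eq by metis
  next
    show "rad (\<lambda>n. g n / real n ^ Suc j)"
      using opT(2)[OF r z, of 0] eq by simp
  qed
qed

lemma zeta_trunc_Suc:
  "zeta_trunc (s # ss) (Suc M) = zeta_trunc (s # ss) M + zsgn s ^ Suc M / real (Suc M) ^ fst s * zeta_trunc ss M"
  by simp

lemma zsgn_pm1: "zsgn s = 1 \<or> zsgn s = -1"
  by (auto simp: zsgn_def)

lemma iter_forms:
  assumes "A = 1 \<or> A = -1" "\<forall>s\<in>set ss. sidx_ok s"
  shows "(\<forall>x. 0 \<le> x \<and> x < 1 \<longrightarrow> iter_int (forms_aux A ss) x = (\<Sum>N. coefA A ss N * x ^ N))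
         \<and> rad (coefA A ss)"
  using assms
proof (induction ss arbitrary: A)
  case Nil
  have c: "coefA A [] = (\<lambda>N. if N = 0 then 1 else 0)"
    by (auto simp: coefA_def fun_eq_iff)
  show ?case
  proof (intro conjI allI impI)
    fix x :: real
    have "(\<lambda>N. coefA A [] N * x ^ N) = (\<lambda>N. if N = 0 then 1 else 0)"
      by (auto simp: c fun_eq_iff)
    moreover have "(\<lambda>N::nat. if N = 0 then 1 else 0 :: real) sums 1"
      using sums_single[of 0 "\<lambda>_. 1::real"] by simp
    ultimately show "iter_int (forms_aux A []) x = (\<Sum>N. coefA A [] N * x ^ N)"
      by (simp add: sums_iff)
  next
    show "rad (coefA A [])"
      unfolding rad_def c by (auto intro!: summable_finite[of "{0}"] split: if_splits)
  qed
next
  case (Cons s ss)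
  define A' where "A' = A * zsgn s"
  have A': "A' = 1 \<or> A' = -1" using Cons.prems zsgn_pm1[of s] by (auto simp: A'_def)
  have k: "fst s \<ge> 1" using Cons.prems by (auto simp: sidx_ok_def)
  have IH: "\<And>x. 0 \<le> x \<Longrightarrow> x < 1 \<Longrightarrow> iter_int (forms_aux A' ss) x = (\<Sum>N. coefA A' ss N * x ^ N)"
    "rad (coefA A' ss)"
    using Cons.IH[OF A'] Cons.prems by auto
  define g where "g = hA A' (coefA A' ss)"
  have g_eq: "g N = (if N = 0 then 0 else A' ^ N / real N * zeta_trunc ss (N - 1))" for N
  proof -
    have "coefA A' ss n * A' ^ n = zeta_trunc ss n - (if n = 0 then 0 else zeta_trunc ss (n - 1))" for n
    proof -
      have "A' ^ n * A' ^ n = 1" using A' by (simp add: power_mult_distrib[symmetric] sq_pm1)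
      then show ?thesis by (simp add: coefA_def)
    qed
    then show ?thesis
      using telesc'[of N "zeta_trunc ss"] by (auto simp: g_def hA_def)
  qed
  have inner: "\<And>t. 0 \<le> t \<Longrightarrow> t < 1 \<Longrightarrow> iter_int ((\<lambda>t. 1 / (A' - t)) # forms_aux A' ss) t = (\<Sum>n. g n * t ^ n)"
  proof -
    fix x :: real assume x: "0 \<le> x" "x < 1"
    have "iter_int ((\<lambda>t. 1 / (A' - t)) # forms_aux A' ss) x =
        integral {0..x} (\<lambda>t. 1 / (A' - t) * iter_int (forms_aux A' ss) t)" by simp
    also have "\<dots> = integral {0..x} (\<lambda>t. 1 / (A' - t) * (\<Sum>N. coefA A' ss N * t ^ N))"
      by (rule integral_cong) (use x IH in auto)
    also have "\<dots> = (\<Sum>n. g n * x ^ n)"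
      unfolding g_def by (rule opA(1)[OF A' IH(2) x])
    finally show "iter_int ((\<lambda>t. 1 / (A' - t)) # forms_aux A' ss) x = (\<Sum>n. g n * x ^ n)" .
  qed
  have rg: "rad g" unfolding g_def by (rule opA(2)[OF A' IH(2), of 0]) auto
  have g0: "g 0 = 0" by (simp add: g_eq)
  have fe: "forms_aux A (s # ss) = replicate (fst s - 1) (\<lambda>t. 1 / t) @ ((\<lambda>t. 1 / (A' - t)) # forms_aux A' ss)"
    by (simp add: A'_def)
  have ce: "(\<lambda>n. g n / real n ^ (fst s - 1)) = coefA A (s # ss)"
  proof
    fix N
    show "g N / real N ^ (fst s - 1) = coefA A (s # ss) N"
    proof (cases N)
      case 0
      then show ?thesis by (simp add: g_eq coefA_def)
    next
      case (Suc M)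
      have pw: "real (Suc M) ^ fst s = real (Suc M) * real (Suc M) ^ (fst s - 1)"
        using k by (cases "fst s") auto
      show ?thesis
        using Suc by (simp add: g_eq coefA_def A'_def pw power_mult_distrib field_simps del: of_nat_Suc)
    qed
  qed
  have R1: "\<forall>t. 0 \<le> t \<and> t < 1 \<longrightarrow> iter_int (replicate (fst s - 1) (\<lambda>t. 1 / t) @ ((\<lambda>t. 1 / (A' - t)) # forms_aux A' ss)) t = (\<Sum>n. (g n / real n ^ (fst s - 1)) * t ^ n)"
    and R2: "rad (\<lambda>n. g n / real n ^ (fst s - 1))"
    using iter_rep[OF inner rg g0, of "fst s - 1"] by blast+
  show ?case unfolding fe ce[symmetric] using R1 R2 by blast
qed

lemma iter_forms_main:
  assumes "\<forall>s\<in>set ss. sidx_ok s" "0 \<le> x" "x < 1"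
  shows "iter_int (forms ss) x = (1 - x) * (\<Sum>N. zeta_trunc ss N * x ^ N)"
proof -
  note I = iter_forms[of 1 ss, OF _ assms(1), simplified]
  have cs: "(\<Sum>n\<le>N. coefA 1 ss n) = zeta_trunc ss N" for N
    unfolding coefA_def by (simp add: telesc)
  have "iter_int (forms ss) x = (\<Sum>N. coefA 1 ss N * x ^ N)"
    using I assms by (simp add: forms_def)
  also have "\<dots> = (1 - x) * (\<Sum>N. (\<Sum>n\<le>N. coefA 1 ss n) * x ^ N)"
    by (rule TL[symmetric]) (use I assms in auto)
  finally show ?thesis by (simp add: cs)
qed

lemma rad_zeta:
  assumes "\<forall>s\<in>set ss. sidx_ok s"
  shows "rad (zeta_trunc ss)"
proof -
  note I = iter_forms[of 1 ss, OF _ assms(1), simplified]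
  have cs: "(\<Sum>n\<le>N. coefA 1 ss n) = zeta_trunc ss N" for N
    unfolding coefA_def by (simp add: telesc)
  show ?thesis using rad_psums'[OF I[THEN conjunct2]] unfolding cs by simp
qed




lemma ftc_real:
  fixes F f :: "real \<Rightarrow> real"
  assumes "a \<le> b" "\<And>t. a \<le> t \<Longrightarrow> t \<le> b \<Longrightarrow> (F has_real_derivative f t) (at t)"
  shows "integral {a..b} f = F b - F a"
proof -
  have "(f has_integral (F b - F a)) {a..b}"
    by (rule fundamental_theorem_of_calculus)
       (use assms in \<open>auto simp: has_real_derivative_iff_has_vector_derivative intro: has_vector_derivative_at_within\<close>)
  then show ?thesis by (rule integral_unique)
qed

lemma forms1: "forms [(1, False)] = [\<lambda>t. 1 / (1 - t)]"
  by (simp add: forms_def zsgn_def)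

lemma forms11: "forms [(1, False), (1, False)] = [\<lambda>t. 1 / (1 - t), \<lambda>t. 1 / (1 - t)]"
  by (simp add: forms_def zsgn_def)

lemma int1:
  assumes "0 \<le> x" "x < 1"
  shows "iter_int (forms [(1, False)]) x = - ln (1 - x)"
proof -
  have "iter_int (forms [(1, False)]) x = integral {0..x} (\<lambda>t. 1 / (1 - t))"
    unfolding forms1 by simp
  also have "\<dots> = - ln (1 - x) - (- ln (1 - 0))"
    by (rule ftc_real) (use assms in \<open>auto intro!: derivative_eq_intros simp: field_simps\<close>)
  finally show ?thesis by simp
qed

lemma int11:
  assumes "0 \<le> x" "x < 1"
  shows "iter_int (forms [(1, False), (1, False)]) x = (ln (1 - x))\<^sup>2 / 2"
proof -
  have "iter_int (forms [(1, False), (1, False)]) x =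
      integral {0..x} (\<lambda>t. 1 / (1 - t) * iter_int (forms [(1, False)]) t)"
    unfolding forms1 forms11 by simp
  also have "\<dots> = integral {0..x} (\<lambda>t. 1 / (1 - t) * (- ln (1 - t)))"
    by (rule integral_cong) (use assms int1 in auto)
  also have "\<dots> = (ln (1 - x))\<^sup>2 / 2 - (ln (1 - 0))\<^sup>2 / 2"
  proof (rule ftc_real)
    fix t :: real assume t: "0 \<le> t" "t \<le> x"
    then have t1: "t < 1" using assms by auto
    have d: "((\<lambda>t. ln (1 - t)) has_real_derivative (-1 / (1 - t))) (at t)"
      using t1 by (auto intro!: derivative_eq_intros simp: field_simps)
    have "((\<lambda>t. ln (1 - t) * ln (1 - t) / 2) has_real_derivative
        ((-1 / (1 - t)) * ln (1 - t) + (-1 / (1 - t)) * ln (1 - t)) / 2) (at t)"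
      by (intro DERIV_cdivide DERIV_mult d)
    moreover have "((-1 / (1 - t)) * ln (1 - t) + (-1 / (1 - t)) * ln (1 - t)) / 2 = 1 / (1 - t) * - ln (1 - t)"
    proof -
      have gen: "\<And>u L :: real. u \<noteq> 0 \<Longrightarrow> ((-1 / u) * L + (-1 / u) * L) / 2 = 1 / u * - L"
        by (simp add: field_simps)
      show ?thesis using gen[of "1 - t" "ln (1 - t)"] t1 by simp
    qed
    ultimately show "((\<lambda>t. (ln (1 - t))\<^sup>2 / 2) has_real_derivative (1 / (1 - t) * - ln (1 - t))) (at t)"
      by (simp add: power2_eq_square)
  qed (use assms in auto)
  finally show ?thesis by simp
qed




lemma abel_lim:
  fixes D :: "nat \<Rightarrow> real"
  assumes lim: "D \<longlonglongrightarrow> d"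
  shows "((\<lambda>e. e * (\<Sum>N. D N * (1 - e) ^ N)) \<longlongrightarrow> d) (at_right 0)"
proof (rule tendstoI)
  fix r :: real assume r: "r > 0"
  obtain N0 where N0: "\<And>N. N \<ge> N0 \<Longrightarrow> \<bar>D N - d\<bar> < r / 2"
    using lim r unfolding LIMSEQ_iff by (metis half_gt_zero real_norm_def)
  have "Bseq (\<lambda>N. D N - d)" using lim by (intro convergent_imp_Bseq convergent_diff convergent_const) (auto simp: convergent_def)
  then obtain B where B: "B > 0" "\<And>N. \<bar>D N - d\<bar> \<le> B" by (auto simp: Bseq_def)
  define \<delta> where "\<delta> = min 1 (r / (2 * (B * real N0 + 1)))"
  have \<delta>: "\<delta> > 0" using r B by (auto simp: \<delta>_def intro!: divide_pos_pos add_nonneg_pos)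
  have "\<forall>e. 0 < e \<and> e < \<delta> \<longrightarrow> dist (e * (\<Sum>N. D N * (1 - e) ^ N)) d < r"
  proof safe
    fix e :: real assume e: "0 < e" "e < \<delta>"
    define x where "x = 1 - e"
    have x: "0 \<le> x" "x < 1" "\<bar>x\<bar> < 1" using e by (auto simp: x_def \<delta>_def)
    have geo: "(\<lambda>N. x ^ N) sums (1 / e)" using geometric_sums[of x] x by (simp add: x_def)
    define u where "u N = (D N - d) * x ^ N" for N
    have ub: "\<bar>u N\<bar> \<le> (if N < N0 then B else 0) * x ^ N + r / 2 * x ^ N" for N
    proof -
      have "\<bar>u N\<bar> = \<bar>D N - d\<bar> * x ^ N" using x by (simp add: u_def abs_mult)
      also have "\<dots> \<le> ((if N < N0 then B else 0) + r / 2) * x ^ N"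
        using B(2)[of N] N0[of N] r x by (intro mult_right_mono) auto
      finally show ?thesis by (simp add: algebra_simps)
    qed
    have s1: "(\<lambda>N. (if N < N0 then B else 0) * x ^ N) sums (\<Sum>N\<in>{..<N0}. (if N < N0 then B else 0) * x ^ N)"
      by (rule sums_finite) auto
    have S1: "(\<Sum>N\<in>{..<N0}. (if N < N0 then B else 0) * x ^ N) \<le> B * real N0"
    proof -
      have "(\<Sum>N\<in>{..<N0}. (if N < N0 then B else 0) * x ^ N) \<le> (\<Sum>N\<in>{..<N0}. B)"
        using x B by (intro sum_mono) (auto intro!: mult_left_le power_le_one)
      then show ?thesis by (simp add: mult.commute)
    qed
    define S where "S = (\<Sum>N\<in>{..<N0}. (if N < N0 then B else 0) * x ^ N)"
    have bs: "(\<lambda>N. (if N < N0 then B else 0) * x ^ N + r / 2 * x ^ N) sums (S + r / 2 * (1 / e))"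
      unfolding S_def by (intro sums_add s1 sums_mult geo)
    have su: "summable (\<lambda>N. \<bar>u N\<bar>)"
      by (rule summable_comparison_test'[where N=0, OF sums_summable[OF bs]]) (use ub in auto)
    have su': "summable u" using su by (rule summable_rabs_cancel)
    have "\<bar>\<Sum>N. u N\<bar> \<le> (\<Sum>N. \<bar>u N\<bar>)" by (rule summable_rabs[OF su])
    also have "\<dots> \<le> (\<Sum>N. (if N < N0 then B else 0) * x ^ N + r / 2 * x ^ N)"
      by (rule suminf_le[OF _ su sums_summable[OF bs]]) (use ub in auto)
    also have "\<dots> = S + r / 2 * (1 / e)" using bs by (simp add: sums_iff)
    finally have ab: "\<bar>\<Sum>N. u N\<bar> \<le> S + r / 2 * (1 / e)" .
    have "(\<lambda>N. u N + d * x ^ N) sums ((\<Sum>N. u N) + d * (1 / e))"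
      by (intro sums_add summable_sums su' sums_mult geo)
    moreover have "(\<lambda>N. u N + d * x ^ N) = (\<lambda>N. D N * x ^ N)"
      by (auto simp: u_def algebra_simps)
    ultimately have "(\<Sum>N. D N * x ^ N) = (\<Sum>N. u N) + d / e" by (simp add: sums_iff)
    then have "e * (\<Sum>N. D N * x ^ N) - d = e * (\<Sum>N. u N)" using e by (simp add: field_simps)
    then have "\<bar>e * (\<Sum>N. D N * x ^ N) - d\<bar> \<le> e * (S + r / 2 * (1 / e))"
      using ab e by (simp add: abs_mult mult_left_mono)
    also have "\<dots> = e * S + r / 2" using e by (simp add: field_simps)
    also have "\<dots> < r"
    proof -
      have "e * S \<le> e * (B * real N0)" using S1 e unfolding S_def by (intro mult_left_mono) auto
      also have "\<dots> < r / 2"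
      proof -
        have "e < r / (2 * (B * real N0 + 1))" using e by (simp add: \<delta>_def)
        moreover have "2 * (B * real N0 + 1) > 0" using B by (simp add: add_nonneg_pos)
        ultimately have "e * (2 * (B * real N0 + 1)) < r" by (simp only: pos_less_divide_eq)
        then show ?thesis using e B by (simp add: field_simps)
      qed
      finally show ?thesis by simp
    qed
    finally show "dist (e * (\<Sum>N. D N * (1 - e) ^ N)) d < r" by (simp add: dist_real_def x_def)
  qed
  then show "\<forall>\<^sub>F e in at_right 0. dist (e * (\<Sum>N. D N * (1 - e) ^ N)) d < r"
    unfolding eventually_at_right_field using \<delta> by blast
qed




lemma poly_div_pow_lim:
  fixes R :: "real poly"
  shows "((\<lambda>y. poly R y / y ^ degree R) \<longlongrightarrow> lead_coeff R) at_top"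
proof -
  define n where "n = degree R"
  have ev: "\<forall>\<^sub>F y in at_top. (\<Sum>i\<le>n. coeff R i / y ^ (n - i)) = poly R y / y ^ n"
    using eventually_gt_at_top[of "0::real"]
  proof eventually_elim
    case (elim y)
    have "poly R y / y ^ n = (\<Sum>i\<le>n. coeff R i * y ^ i) / y ^ n"
      by (simp add: poly_altdef n_def)
    also have "\<dots> = (\<Sum>i\<le>n. coeff R i * y ^ i / y ^ n)" by (simp add: sum_divide_distrib)
    also have "\<dots> = (\<Sum>i\<le>n. coeff R i / y ^ (n - i))"
    proof (intro sum.cong refl)
      fix i assume "i \<in> {..n}"
      then have "y ^ n = y ^ i * y ^ (n - i)" by (simp add: power_add[symmetric])
      then show "coeff R i * y ^ i / y ^ n = coeff R i / y ^ (n - i)" using elim by simp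
    qed
    finally show ?case by simp
  qed
  have "((\<lambda>y. \<Sum>i\<le>n. coeff R i / y ^ (n - i)) \<longlongrightarrow> (\<Sum>i\<le>n. if i = n then coeff R i else 0)) at_top"
  proof (intro tendsto_sum)
    fix i assume i: "i \<in> {..n}"
    show "((\<lambda>y. coeff R i / y ^ (n - i)) \<longlongrightarrow> (if i = n then coeff R i else 0)) at_top"
    proof (cases "i = n")
      case True then show ?thesis by simp
    next
      case False
      then have "n - i > 0" using i by auto
      then have "filterlim (\<lambda>y::real. y ^ (n - i)) at_top at_top"
        by (intro filterlim_pow_at_top filterlim_ident)
      then have "((\<lambda>y. coeff R i / y ^ (n - i)) \<longlongrightarrow> 0) at_top"
        by (intro tendsto_divide_0[OF tendsto_const] filterlim_at_top_imp_at_infinity)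
      then show ?thesis using False by simp
    qed
  qed
  then have "((\<lambda>y. \<Sum>i\<le>n. coeff R i / y ^ (n - i)) \<longlongrightarrow> lead_coeff R) at_top"
    by (simp add: n_def)
  then show ?thesis using tendsto_cong[OF ev] unfolding n_def by simp
qed

lemma poly_tendsto_zero_imp:
  fixes R :: "real poly" and F :: "'a filter"
  assumes f: "filterlim f at_top F" and F: "F \<noteq> bot" and lim: "((\<lambda>x. poly R (f x)) \<longlongrightarrow> 0) F"
  shows "R = 0"
proof (rule ccontr)
  assume "R \<noteq> 0"
  define c where "c = lead_coeff R"
  have c: "c \<noteq> 0" using \<open>R \<noteq> 0\<close> by (simp add: c_def)
  have l: "((\<lambda>x. poly R (f x) / f x ^ degree R) \<longlongrightarrow> c) F"
    unfolding c_def by (rule filterlim_compose[OF poly_div_pow_lim f])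
  have "\<forall>\<^sub>F x in F. dist (poly R (f x) / f x ^ degree R) c < \<bar>c\<bar> / 2"
    using tendstoD[OF l, of "\<bar>c\<bar> / 2"] c by simp
  moreover have "\<forall>\<^sub>F x in F. dist (poly R (f x)) 0 < \<bar>c\<bar> / 2"
    using tendstoD[OF lim, of "\<bar>c\<bar> / 2"] c by simp
  moreover have "\<forall>\<^sub>F x in F. f x \<ge> 1"
    using f by (simp add: filterlim_at_top)
  ultimately have "\<forall>\<^sub>F x in F. False"
  proof eventually_elim
    case (elim x)
    have q: "\<bar>poly R (f x) / f x ^ degree R\<bar> > \<bar>c\<bar> / 2"
    proof -
      have gen: "\<And>a. \<bar>a - c\<bar> < \<bar>c\<bar> / 2 \<Longrightarrow> \<bar>a\<bar> > \<bar>c\<bar> / 2" by arith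
      show ?thesis using elim(1) unfolding dist_real_def by (rule gen)
    qed
    have p1: "f x ^ degree R \<ge> 1" using elim(3) by (simp add: one_le_power)
    have "\<bar>poly R (f x) / f x ^ degree R\<bar> \<le> \<bar>poly R (f x)\<bar>"
    proof -
      have gen: "\<And>p q :: real. q \<ge> 1 \<Longrightarrow> \<bar>p / q\<bar> \<le> \<bar>p\<bar>"
      proof -
        fix p q :: real assume q: "q \<ge> 1"
        have "\<bar>p\<bar> * 1 \<le> \<bar>p\<bar> * q" using q by (intro mult_left_mono) auto
        then show "\<bar>p / q\<bar> \<le> \<bar>p\<bar>" using q by (simp add: abs_divide divide_le_eq)
      qed
      show ?thesis using p1 by (rule gen)
    qed
    moreover have "\<bar>poly R (f x)\<bar> < \<bar>c\<bar> / 2" using elim(2) by (simp add: dist_real_def)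
    ultimately show False using q by linarith
  qed
  then show False using F by (simp add: eventually_False)
qed




lemma zeta_star_eq:
  assumes "((\<lambda>M. zeta_trunc ss M - poly P (ln (real M) + euler_mascheroni)) \<longlongrightarrow> 0) sequentially"
  shows "zeta_star ss = P"
  unfolding zeta_star_def
proof (rule the_equality)
  show "((\<lambda>M. zeta_trunc ss M - poly P (ln (real M) + euler_mascheroni)) \<longlongrightarrow> 0) sequentially" by fact
  fix P' assume P': "((\<lambda>M. zeta_trunc ss M - poly P' (ln (real M) + euler_mascheroni)) \<longlongrightarrow> 0) sequentially"
  have fl: "filterlim (\<lambda>M. ln (real M) + euler_mascheroni) at_top sequentially"
  proof -
    have "filterlim (\<lambda>M. ln (real M)) at_top sequentially"
      by (rule filterlim_compose[OF ln_at_top filterlim_real_sequentially])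
    then have "filterlim (\<lambda>M. euler_mascheroni + ln (real M)) at_top sequentially"
      by (rule filterlim_tendsto_add_at_top[OF tendsto_const])
    then show ?thesis by (simp add: add.commute)
  qed
  have "((\<lambda>M. poly (P' - P) (ln (real M) + euler_mascheroni)) \<longlongrightarrow> 0 - 0) sequentially"
    using tendsto_diff[OF assms P'] by (simp add: algebra_simps)
  then have "P' - P = 0" by (intro poly_tendsto_zero_imp[OF fl]) auto
  then show "P' = P" by simp
qed

lemma zeta_sh_eq:
  assumes "((\<lambda>\<epsilon>. iter_int (forms ss) (1 - \<epsilon>) - poly Q (- ln \<epsilon>)) \<longlongrightarrow> 0) (at_right 0)"
  shows "zeta_sh ss = Q"
  unfolding zeta_sh_def
proof (rule the_equality)
  show "((\<lambda>\<epsilon>. iter_int (forms ss) (1 - \<epsilon>) - poly Q (- ln \<epsilon>)) \<longlongrightarrow> 0) (at_right 0)" by fact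
  fix Q' assume Q': "((\<lambda>\<epsilon>. iter_int (forms ss) (1 - \<epsilon>) - poly Q' (- ln \<epsilon>)) \<longlongrightarrow> 0) (at_right 0)"
  have fl: "filterlim (\<lambda>\<epsilon>::real. - ln \<epsilon>) at_top (at_right 0)"
    using ln_at_0 by (simp add: filterlim_uminus_at_top)
  have "((\<lambda>\<epsilon>. poly (Q' - Q) (- ln \<epsilon>)) \<longlongrightarrow> 0 - 0) (at_right 0)"
    using tendsto_diff[OF assms Q'] by (simp add: algebra_simps)
  then have "Q' - Q = 0" by (intro poly_tendsto_zero_imp[OF fl]) auto
  then show "Q' = Q" by simp
qed




definition rate :: "(nat \<Rightarrow> real) \<Rightarrow> real \<Rightarrow> bool" where
  "rate S \<sigma> \<longleftrightarrow> (\<exists>C. \<forall>n. \<bar>S n - \<sigma>\<bar> \<le> C / sqrt (real n + 1))"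

lemma lim_isqrt: "(\<lambda>n. C / sqrt (real n + 1)) \<longlonglongrightarrow> 0"
proof -
  have "filterlim (\<lambda>n. 1 + real n) at_top sequentially"
    by (rule filterlim_tendsto_add_at_top[OF tendsto_const filterlim_real_sequentially])
  then have "filterlim (\<lambda>n. sqrt (real n + 1)) at_top sequentially"
    by (intro filterlim_compose[OF sqrt_at_top]) (simp add: add.commute)
  then show ?thesis
    by (intro tendsto_divide_0[OF tendsto_const] filterlim_at_top_imp_at_infinity)
qed

lemma abs_aux: "0 \<le> (s::real) \<Longrightarrow> \<bar>C\<bar> * 2 / s < e \<Longrightarrow> C * 2 / s < e"
proof -
  assume a: "0 \<le> s" "\<bar>C\<bar> * 2 / s < e"
  have "C * 2 / s \<le> \<bar>C\<bar> * 2 / s" using a by (intro divide_right_mono mult_right_mono) auto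
  then show ?thesis using a(2) by (rule le_less_trans)
qed

lemma rate_lim: "rate S \<sigma> \<Longrightarrow> S \<longlonglongrightarrow> \<sigma>"
proof -
  assume "rate S \<sigma>"
  then obtain C where C: "\<And>n. \<bar>S n - \<sigma>\<bar> \<le> C / sqrt (real n + 1)" by (auto simp: rate_def)
  have "(\<lambda>n. S n - \<sigma>) \<longlonglongrightarrow> 0"
    by (rule Lim_null_comparison[OF _ lim_isqrt[of C]]) (use C in auto)
  then show "S \<longlonglongrightarrow> \<sigma>" by (simp add: LIM_zero_iff)
qed

lemma rate_unique: "rate S \<sigma> \<Longrightarrow> rate S \<tau> \<Longrightarrow> \<sigma> = \<tau>"
  using rate_lim LIMSEQ_unique by blast

lemma cauchy_rate:
  assumes bd: "\<And>n N. 1 \<le> n \<Longrightarrow> n \<le> N \<Longrightarrow> \<bar>S N - S n\<bar> \<le> C / sqrt (real n + 1)"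
  shows "\<exists>\<sigma>. rate S \<sigma>"
proof -
  have "Cauchy S"
  proof (rule CauchyI)
    fix e :: real assume e: "e > 0"
    have "\<forall>\<^sub>F n in sequentially. dist (C / sqrt (real n + 1)) 0 < e / 2"
      by (rule tendstoD[OF lim_isqrt]) (use e in simp)
    then have "\<forall>\<^sub>F n in sequentially. C / sqrt (real n + 1) < e / 2"
      by (rule eventually_mono) (auto simp only: dist_real_def diff_zero abs_less_iff)
    then obtain M0 where M0: "\<And>n. n \<ge> M0 \<Longrightarrow> C / sqrt (real n + 1) < e / 2"
      by (auto simp: eventually_sequentially)
    define M where "M = max 1 M0"
    show "\<exists>M. \<forall>m\<ge>M. \<forall>n\<ge>M. norm (S m - S n) < e"
    proof (intro exI allI impI)
      fix m n assume mn: "M \<le> m" "M \<le> n"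
      have "\<bar>S m - S M\<bar> \<le> C / sqrt (real M + 1)" using bd[of M m] mn by (auto simp: M_def)
      moreover have "\<bar>S n - S M\<bar> \<le> C / sqrt (real M + 1)" using bd[of M n] mn by (auto simp: M_def)
      moreover have "C / sqrt (real M + 1) < e / 2" using M0[of M] by (auto simp: M_def)
      ultimately show "norm (S m - S n) < e" unfolding real_norm_def by arith
    qed
  qed
  then obtain \<sigma> where lim: "S \<longlonglongrightarrow> \<sigma>" by (auto simp: Cauchy_convergent_iff convergent_def)
  have b1: "\<bar>S n - \<sigma>\<bar> \<le> C / sqrt (real n + 1)" if n: "n \<ge> 1" for n
  proof -
    have "(\<lambda>N. \<bar>S N - S n\<bar>) \<longlonglongrightarrow> \<bar>\<sigma> - S n\<bar>"
      by (intro tendsto_intros lim)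
    moreover have "\<forall>\<^sub>F N in sequentially. \<bar>S N - S n\<bar> \<le> C / sqrt (real n + 1)"
      using bd n by (auto simp: eventually_sequentially)
    ultimately have "\<bar>\<sigma> - S n\<bar> \<le> C / sqrt (real n + 1)"
      by (rule tendsto_upperbound) auto
    then show ?thesis by (simp add: abs_minus_commute)
  qed
  have C0: "C \<ge> 0" using bd[of 1 1] by (simp add: zero_le_divide_iff)
  define C' where "C' = max C \<bar>S 0 - \<sigma>\<bar>"
  have "\<bar>S n - \<sigma>\<bar> \<le> C' / sqrt (real n + 1)" for n
  proof (cases "n = 0")
    case True then show ?thesis by (simp add: C'_def)
  next
    case False
    then have "\<bar>S n - \<sigma>\<bar> \<le> C / sqrt (real n + 1)" using b1 by auto
    also have "\<dots> \<le> C' / sqrt (real n + 1)" by (intro divide_right_mono) (auto simp: C'_def)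
    finally show ?thesis .
  qed
  then show ?thesis by (auto simp: rate_def)
qed

lemma sum_split_ivl:
  "n \<le> (N::nat) \<Longrightarrow> (\<Sum>m=1..N. d m) - (\<Sum>m=1..n. d m) = (\<Sum>m\<in>{n<..N}. (d m :: real))"
proof -
  assume "n \<le> N"
  then have "{1..N} = {1..n} \<union> {n<..N}" by auto
  moreover have "{1..n} \<inter> {n<..N} = {}" by auto
  ultimately show ?thesis by (simp add: sum.union_disjoint)
qed

lemma telesc_ivl:
  "(\<Sum>m\<in>{n<..n+k}. (g m - g (Suc m) :: real)) = g (Suc n) - g (Suc (n + k))"
proof (induction k)
  case 0 then show ?case by simp
next
  case (Suc k)
  have "{n<..n + Suc k} = insert (Suc (n + k)) {n<..n+k}" by auto
  then show ?case using Suc by simp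
qed

lemma gen_tel:
  fixes p q :: real
  assumes p1: "p \<ge> 1" and pq: "q * q = p * p + 1" and qp: "q \<ge> p"
  shows "1 / (p * p * p) \<le> 4 * (1 / p - 1 / q)"
proof -
  have pp: "1 \<le> p * p" using p1 mult_mono[OF p1 p1] by simp
  have q2: "q \<le> 2 * p"
  proof -
    have "q\<^sup>2 \<le> (2 * p)\<^sup>2" using pq pp by (simp add: power2_eq_square)
    then show ?thesis by (rule power2_le_imp_le) (use p1 in simp)
  qed
  have p0: "p > 0" using p1 by simp
  have q0: "q > 0" using p0 qp by simp
  have d: "q - p = 1 / (q + p)"
  proof -
    have "(q - p) * (q + p) = 1" using pq by (simp add: algebra_simps)
    moreover have "q + p > 0" using p0 q0 by simp
    ultimately show ?thesis by (simp add: eq_divide_eq)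
  qed
  have "1 / p - 1 / q = (q - p) / (p * q)" using p0 q0 by (simp add: diff_divide_distrib)
  also have "\<dots> = 1 / (p * q * (q + p))" using d by simp
  finally have e: "4 * (1 / p - 1 / q) = 4 / (p * q * (q + p))" by simp
  have "p * q * (q + p) \<le> 4 * (p * p * p)"
  proof -
    have a1: "q * p \<le> (2 * p) * p" using q2 p1 by (intro mult_right_mono) auto
    have a2: "q * q \<le> 2 * (p * p)" using pq pp by simp
    have "q * (q + p) \<le> 4 * (p * p)" using a1 a2 by (simp add: algebra_simps)
    then have "p * (q * (q + p)) \<le> p * (4 * (p * p))" using p0 by (intro mult_left_mono) auto
    then show ?thesis by (simp add: algebra_simps)
  qed
  moreover have "0 < p * q * (q + p)" using p0 q0 by simp
  ultimately have "1 / (4 * (p * p * p)) \<le> 1 / (p * q * (q + p))"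
    by (intro frac_le) auto
  then have "4 * (1 / (4 * (p * p * p))) \<le> 4 * (1 / (p * q * (q + p)))" by simp
  then show ?thesis unfolding e by simp
qed

lemma isqrt_tel:
  assumes "m \<ge> 1"
  shows "1 / (real m * sqrt (real m)) \<le> 4 * (1 / sqrt (real m) - 1 / sqrt (real (Suc m)))"
proof -
  have "1 / (sqrt (real m) * sqrt (real m) * sqrt (real m)) \<le> 4 * (1 / sqrt (real m) - 1 / sqrt (real (Suc m)))"
    by (rule gen_tel) (use assms in auto)
  then show ?thesis by simp
qed

lemma tail32:
  assumes d: "\<And>m. m \<ge> 1 \<Longrightarrow> \<bar>d m\<bar> \<le> B / (real m * sqrt (real m))" and n: "1 \<le> n" "n \<le> N"
  shows "\<bar>\<Sum>m\<in>{n<..N}. (d m :: real)\<bar> \<le> 4 * B / sqrt (real n + 1)"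
proof -
  obtain k where k: "N = n + k" using n by (metis le_add_diff_inverse)
  have "\<bar>d 1\<bar> \<le> B" using d[of 1] by simp
  then have B0: "B \<ge> 0" by (meson abs_ge_zero order_trans)
  have "\<bar>\<Sum>m\<in>{n<..N}. d m\<bar> \<le> (\<Sum>m\<in>{n<..N}. \<bar>d m\<bar>)" by (rule sum_abs)
  also have "\<dots> \<le> (\<Sum>m\<in>{n<..N}. B * (4 * (1 / sqrt (real m) - 1 / sqrt (real (Suc m)))))"
  proof (intro sum_mono)
    fix m assume "m \<in> {n<..N}"
    then have m: "m \<ge> 1" using n by auto
    have "\<bar>d m\<bar> \<le> B * (1 / (real m * sqrt (real m)))" using d[OF m] by simp
    also have "\<dots> \<le> B * (4 * (1 / sqrt (real m) - 1 / sqrt (real (Suc m))))"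
      by (intro mult_left_mono isqrt_tel m B0)
    finally show "\<bar>d m\<bar> \<le> B * (4 * (1 / sqrt (real m) - 1 / sqrt (real (Suc m))))" .
  qed
  also have "\<dots> = 4 * B * (\<Sum>m\<in>{n<..N}. (1 / sqrt (real m) - 1 / sqrt (real (Suc m))))"
    by (simp add: sum_distrib_left mult_ac)
  also have "(\<Sum>m\<in>{n<..N}. (1 / sqrt (real m) - 1 / sqrt (real (Suc m)))) =
      1 / sqrt (real (Suc n)) - 1 / sqrt (real (Suc (n + k)))"
    unfolding k by (rule telesc_ivl[of "\<lambda>m. 1 / sqrt (real m)"])
  also have "4 * B * (1 / sqrt (real (Suc n)) - 1 / sqrt (real (Suc (n + k)))) \<le> 4 * B * (1 / sqrt (real (Suc n)))"
    using B0 by (intro mult_left_mono) auto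
  finally show ?thesis by (simp add: add.commute)
qed

lemma sum32_rate:
  assumes d: "\<And>m. m \<ge> 1 \<Longrightarrow> \<bar>d m\<bar> \<le> B / (real m * sqrt (real m))"
  shows "\<exists>\<sigma>. rate (\<lambda>N. \<Sum>m=1..N. d m) \<sigma>"
proof (rule cauchy_rate[where C="4 * B"])
  fix n N :: nat assume n: "1 \<le> n" "n \<le> N"
  show "\<bar>(\<Sum>m=1..N. d m) - (\<Sum>m=1..n. d m)\<bar> \<le> 4 * B / sqrt (real n + 1)"
    using tail32[OF d n] sum_split_ivl[OF n(2), of d] by simp
qed




lemma alt_bound:
  fixes a :: "nat \<Rightarrow> real"
  assumes "\<And>m. m \<ge> n \<Longrightarrow> a (Suc m) \<le> a m" "\<And>m. m \<ge> n \<Longrightarrow> a m \<ge> 0"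
  shows "0 \<le> (-1)^n * (\<Sum>m\<in>{n..n+k}. (-1)^m * a m) \<and> (-1)^n * (\<Sum>m\<in>{n..n+k}. (-1)^m * a m) \<le> a n"
  using assms
proof (induction k arbitrary: n)
  case 0
  have "(-1::real)^n * ((-1)^n * a n) = a n"
    by (simp add: mult.assoc[symmetric] power_mult_distrib[symmetric])
  then show ?case using 0 by simp
next
  case (Suc k)
  have IH: "0 \<le> (-1)^(Suc n) * (\<Sum>m\<in>{Suc n..Suc n+k}. (-1)^m * a m)"
    "(-1)^(Suc n) * (\<Sum>m\<in>{Suc n..Suc n+k}. (-1)^m * a m) \<le> a (Suc n)"
    using Suc.IH[of "Suc n"] Suc.prems by auto
  have set: "{n..n + Suc k} = insert n {Suc n..Suc n + k}" by auto
  define T where "T = (\<Sum>m\<in>{Suc n..Suc n+k}. (-1)^m * a m)"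
  have sq: "(-1::real)^n * (-1)^n = 1" by (simp add: power_mult_distrib[symmetric])
  have "(-1)^n * (\<Sum>m\<in>{n..n+Suc k}. (-1)^m * a m) = (-1)^n * ((-1)^n * a n + T)"
    unfolding set T_def by simp
  also have "\<dots> = a n - (-1)^(Suc n) * T"
    using sq by (simp add: algebra_simps)
  finally have e: "(-1)^n * (\<Sum>m\<in>{n..n+Suc k}. (-1)^m * a m) = a n - (-1)^(Suc n) * T" .
  have "a (Suc n) \<le> a n" using Suc.prems by auto
  then show ?case unfolding e using IH unfolding T_def by linarith
qed

lemma alt_tail:
  fixes a :: "nat \<Rightarrow> real"
  assumes "\<And>m. m > n \<Longrightarrow> a (Suc m) \<le> a m" "\<And>m. m > n \<Longrightarrow> a m \<ge> 0" "n \<le> N"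
  shows "\<bar>\<Sum>m\<in>{n<..N}. (-1)^m * a m\<bar> \<le> a (Suc n)"
proof (cases "N = n")
  case True
  then show ?thesis using assms(2)[of "Suc n"] by simp
next
  case False
  then obtain k where k: "N = Suc n + k" using assms(3) by (metis le_Suc_ex le_neq_implies_less less_eq_Suc_le)
  have "{n<..N} = {Suc n..Suc n + k}" using k by auto
  moreover note B = alt_bound[of "Suc n" a k]
  have B': "0 \<le> (-1)^(Suc n) * (\<Sum>m\<in>{Suc n..Suc n+k}. (-1)^m * a m) \<and> (-1)^(Suc n) * (\<Sum>m\<in>{Suc n..Suc n+k}. (-1)^m * a m) \<le> a (Suc n)"
    by (rule B) (use assms in auto)
  have "\<bar>(-1::real)^(Suc n) * X\<bar> = \<bar>X\<bar>" for X by (simp add: abs_mult)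
  ultimately show ?thesis using B' by (metis abs_of_nonneg)
qed

lemma harm_le_ln1: "n \<ge> 1 \<Longrightarrow> harm n \<le> ln (real n) + (1::real)"
  using euler_mascheroni_sequence_decreasing[of 1 n] by (simp add: harm_def)

lemma harm_qrt: "harm n \<le> 4 * sqrt (sqrt (real n))"
proof (cases "n = 0")
  case True then show ?thesis by (simp add: harm_def)
next
  case False
  define y where "y = sqrt (sqrt (real n))"
  have y0: "y > 0" using False by (simp add: y_def)
  have "y ^ 4 = real n" by (simp add: y_def numeral_eq_Suc power_Suc mult.assoc[symmetric])
  then have "ln (real n) = 4 * ln y" using y0 by (metis ln_realpow of_nat_numeral)
  moreover have "ln y \<le> y - 1" using y0 by (rule ln_le_minus_one)
  ultimately have "ln (real n) \<le> 4 * y - 4" by simp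
  then show ?thesis using harm_le_ln1[of n] False unfolding y_def by simp
qed

lemma harm_bnd: "harm n \<le> 4 * sqrt (real n + 1)"
proof -
  have "real n \<le> (real n + 1)\<^sup>2" by (simp add: power2_eq_square algebra_simps)
  then have "sqrt (real n) \<le> sqrt ((real n + 1)\<^sup>2)" by (rule real_sqrt_le_mono)
  then have "sqrt (real n) \<le> real n + 1" by simp
  then have A: "sqrt (sqrt (real n)) \<le> sqrt (real n + 1)" by (rule real_sqrt_le_mono)
  show ?thesis using harm_qrt[of n] A by linarith
qed

lemma harm_sq_bnd: "(harm n)\<^sup>2 \<le> 16 * sqrt (real n + 1)"
proof -
  have "(harm n)\<^sup>2 \<le> (4 * sqrt (sqrt (real n)))\<^sup>2"
    using harm_qrt[of n] harm_nonneg[of n] by (intro power_mono) auto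
  also have "\<dots> = 16 * sqrt (real n)" by (simp add: power_mult_distrib)
  also have "\<dots> \<le> 16 * sqrt (real n + 1)" by simp
  finally show ?thesis .
qed

lemma zeta_bnd:
  assumes "\<forall>s\<in>set ss. sidx_ok s"
  shows "\<bar>zeta_trunc ss n\<bar> \<le> harm n ^ length ss"
  using assms
proof (induction ss arbitrary: n)
  case Nil then show ?case by simp
next
  case (Cons s ss)
  have k: "fst s \<ge> 1" using Cons.prems by (auto simp: sidx_ok_def)
  have "\<bar>zeta_trunc (s # ss) n\<bar> \<le> (\<Sum>m=1..n. \<bar>zsgn s ^ m / real m ^ fst s * zeta_trunc ss (m - 1)\<bar>)"
    unfolding zeta_trunc.simps by (rule sum_abs)
  also have "\<dots> \<le> (\<Sum>m=1..n. inverse (real m) * harm n ^ length ss)"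
  proof (intro sum_mono)
    fix m assume m: "m \<in> {1..n}"
    have z: "\<bar>zsgn s ^ m\<bar> = 1" by (auto simp: zsgn_def power_abs)
    have "real m ^ 1 \<le> real m ^ fst s" using m k by (intro power_increasing) auto
    then have i: "1 / real m ^ fst s \<le> inverse (real m)" using m by (simp add: field_simps)
    have h: "\<bar>zeta_trunc ss (m - 1)\<bar> \<le> harm n ^ length ss"
      using Cons.IH[of "m - 1"] Cons.prems harm_mono[of "m - 1" n] m harm_nonneg[of "m-1"]
      by (meson power_mono order_trans le_diff_conv atLeastAtMost_iff list.set_intros(2) le_SucI diff_le_self)
    have "\<bar>zsgn s ^ m / real m ^ fst s * zeta_trunc ss (m - 1)\<bar> = 1 / real m ^ fst s * \<bar>zeta_trunc ss (m - 1)\<bar>"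
      by (simp add: abs_mult z)
    also have "\<dots> \<le> inverse (real m) * harm n ^ length ss"
      using i h m by (intro mult_mono) auto
    finally show "\<bar>zsgn s ^ m / real m ^ fst s * zeta_trunc ss (m - 1)\<bar> \<le> inverse (real m) * harm n ^ length ss" .
  qed
  also have "\<dots> = harm n * harm n ^ length ss" by (simp add: harm_def sum_distrib_right)
  finally show ?case by simp
qed

lemma zeta_bnd2:
  assumes "\<forall>s\<in>set ss. sidx_ok s" "length ss \<le> 2"
  shows "\<bar>zeta_trunc ss n\<bar> \<le> 17 * sqrt (real n + 1)"
proof -
  have s1: "1 \<le> sqrt (real n + 1)" by simp
  have "harm n ^ length ss \<le> 17 * sqrt (real n + 1)"
  proof -
    have "length ss = 0 \<or> length ss = 1 \<or> length ss = 2" using assms(2) by arith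
    moreover have "harm n ^ 0 \<le> 17 * sqrt (real n + 1)" using s1 unfolding power_0 by linarith
    moreover have "harm n ^ 1 \<le> 17 * sqrt (real n + 1)" using s1 harm_bnd[of n] unfolding power_one_right by linarith
    moreover have "harm n ^ 2 \<le> 17 * sqrt (real n + 1)" using s1 harm_sq_bnd[of n] by linarith
    ultimately show ?thesis by metis
  qed
  then show ?thesis using zeta_bnd[OF assms(1), of n] by simp
qed




lemma isqrt_pow: "m \<ge> 1 \<Longrightarrow> sqrt (real m) / real m ^ k \<le> 1 / (real m * sqrt (real m))" if "k \<ge> 2"
proof -
  assume m: "m \<ge> 1"
  have "real m ^ 2 \<le> real m ^ k" using m that by (intro power_increasing) auto
  then have "sqrt (real m) / real m ^ k \<le> sqrt (real m) / real m ^ 2"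
    using m by (intro divide_left_mono) auto
  also have "\<dots> = 1 / (real m * sqrt (real m))"
  proof -
    have "real m ^ 2 = real m * sqrt (real m) * sqrt (real m)" by (simp add: power2_eq_square)
    then show ?thesis using m by (simp add: field_simps)
  qed
  finally show ?thesis .
qed

lemma step_big:
  assumes k: "fst s \<ge> 2" and K: "\<And>m. \<bar>K m\<bar> \<le> B * sqrt (real m + 1)"
  shows "\<exists>\<sigma>. rate (\<lambda>N. \<Sum>n=1..N. zsgn s ^ n / real n ^ fst s * K (n - 1)) \<sigma>"
proof (rule sum32_rate)
  fix m :: nat assume m: "m \<ge> 1"
  have B0: "B \<ge> 0" using K[of 0] by (smt (verit) abs_ge_zero mult_cancel_left1 real_sqrt_one of_nat_0)
  have z: "\<bar>zsgn s ^ m\<bar> = 1" by (auto simp: zsgn_def power_abs)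
  have Km: "\<bar>K (m - 1)\<bar> \<le> B * sqrt (real m)" using K[of "m - 1"] m by (simp add: of_nat_diff)
  have "\<bar>zsgn s ^ m / real m ^ fst s * K (m - 1)\<bar> = \<bar>K (m - 1)\<bar> / real m ^ fst s"
    by (simp add: abs_mult z)
  also have "\<dots> \<le> B * sqrt (real m) / real m ^ fst s"
    using Km m by (intro divide_right_mono) auto
  also have "\<dots> = B * (sqrt (real m) / real m ^ fst s)" by simp
  also have "\<dots> \<le> B * (1 / (real m * sqrt (real m)))"
    using isqrt_pow[OF k m] B0 by (intro mult_left_mono) auto
  finally show "\<bar>zsgn s ^ m / real m ^ fst s * K (m - 1)\<bar> \<le> B / (real m * sqrt (real m))" by simp
qed

lemma rate_D:
  assumes "rate K \<kappa>"
  shows "\<exists>d. rate (\<lambda>N. \<Sum>n=1..N. (K (n - 1) - \<kappa>) / real n) d"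
proof -
  obtain C where C: "\<And>n. \<bar>K n - \<kappa>\<bar> \<le> C / sqrt (real n + 1)" using assms by (auto simp: rate_def)
  show ?thesis
  proof (rule sum32_rate)
    fix m :: nat assume m: "m \<ge> 1"
    have "\<bar>K (m - 1) - \<kappa>\<bar> \<le> C / sqrt (real m)" using C[of "m - 1"] m by (simp add: of_nat_diff)
    then have "\<bar>K (m - 1) - \<kappa>\<bar> / real m \<le> C / sqrt (real m) / real m"
      using m by (intro divide_right_mono) auto
    then show "\<bar>(K (m - 1) - \<kappa>) / real m\<bar> \<le> C / (real m * sqrt (real m))"
      by (simp add: abs_divide mult.commute)
  qed
qed

lemma harm_ratio_dec:
  assumes "m \<ge> 2"
  shows "harm m / real (Suc m) \<le> harm (m - 1) / real m"
proof -
  define h where "h = (harm (m - 1) :: real)"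
  have "harm 1 \<le> (harm (m - 1) :: real)" by (rule harm_mono) (use assms in simp)
  moreover have "harm 1 = (1::real)" by (simp add: harm_def)
  ultimately have h1: "h \<ge> 1" by (simp add: h_def)
  have hm: "harm m = h + 1 / real m"
    using harm_Suc[of "m - 1"] assms by (simp add: h_def inverse_eq_divide)
  have m0: "real m > 0" using assms by simp
  have gen: "\<And>x. x > 0 \<Longrightarrow> (h + 1 / x) / (x + 1) \<le> h / x"
  proof -
    fix x :: real assume x: "x > 0"
    have e1: "(h + 1 / x) / (x + 1) = (h * x + 1) / (x * (x + 1))" using x by (simp add: field_simps)
    have e2: "h / x = (h * x + h) / (x * (x + 1))"
    proof -
      have "(h * x + h) / (x * (x + 1)) = (h * (x + 1)) / (x * (x + 1))" by (simp add: algebra_simps)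
      also have "\<dots> = h / x" using x by (intro mult_divide_mult_cancel_right) auto
      finally show ?thesis by simp
    qed
    show "(h + 1 / x) / (x + 1) \<le> h / x" unfolding e1 e2
      using h1 x by (intro divide_right_mono) auto
  qed
  have "(h + 1 / real m) / real (Suc m) \<le> h / real m"
    using gen[OF m0] by (simp add: add.commute)
  then show ?thesis by (simp add: hm h_def)
qed

lemma step_alt:
  assumes s: "s = (1, True)" and K': "rate K' \<kappa>'" and K: "\<And>m. K m = lam * harm m + K' m"
  shows "\<exists>\<sigma>. rate (\<lambda>N. \<Sum>n=1..N. zsgn s ^ n / real n ^ fst s * K (n - 1)) \<sigma>"
proof -
  obtain C where C: "\<And>n. \<bar>K' n - \<kappa>'\<bar> \<le> C / sqrt (real n + 1)" using K' by (auto simp: rate_def)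
  have zs: "zsgn s = -1" "fst s = 1" using s by (auto simp: zsgn_def)
  show ?thesis
  proof (rule cauchy_rate[where C="4 * \<bar>lam\<bar> + \<bar>\<kappa>'\<bar> + 4 * C"])
    fix n N :: nat assume n: "1 \<le> n" "n \<le> N"
    define sq where "sq = sqrt (real n + 1)"
    have sq1: "sq \<ge> 1" by (simp add: sq_def)
    define A where "A = (\<Sum>m\<in>{n<..N}. (-1) ^ m * (harm (m - 1) / real m))"
    define Bs where "Bs = (\<Sum>m\<in>{n<..N}. (-1) ^ m * (1 / real m))"
    define E where "E = (\<Sum>m\<in>{n<..N}. (-1) ^ m * ((K' (m - 1) - \<kappa>') / real m))"
    have split: "(\<Sum>m=1..N. zsgn s ^ m / real m ^ fst s * K (m - 1)) - (\<Sum>m=1..n. zsgn s ^ m / real m ^ fst s * K (m - 1))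
        = lam * A + \<kappa>' * Bs + E"
    proof -
      have "(\<Sum>m=1..N. zsgn s ^ m / real m ^ fst s * K (m - 1)) - (\<Sum>m=1..n. zsgn s ^ m / real m ^ fst s * K (m - 1))
          = (\<Sum>m\<in>{n<..N}. zsgn s ^ m / real m ^ fst s * K (m - 1))"
        by (rule sum_split_ivl[OF n(2)])
      also have "\<dots> = (\<Sum>m\<in>{n<..N}. lam * ((-1) ^ m * (harm (m - 1) / real m)) + \<kappa>' * ((-1) ^ m * (1 / real m))
            + (-1) ^ m * ((K' (m - 1) - \<kappa>') / real m))"
        by (intro sum.cong refl) (simp add: zs K algebra_simps diff_divide_distrib add_divide_distrib)
      also have "\<dots> = lam * A + \<kappa>' * Bs + E"
        by (simp add: A_def Bs_def E_def sum.distrib sum_distrib_left)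
      finally show ?thesis .
    qed
    have hA: "\<bar>A\<bar> \<le> 4 / sq"
    proof -
      have "\<bar>A\<bar> \<le> harm (Suc n - 1) / real (Suc n)"
        unfolding A_def
        by (rule alt_tail[where a="\<lambda>m. harm (m - 1) / real m"])
           (use n harm_ratio_dec in \<open>auto intro!: divide_nonneg_nonneg harm_nonneg\<close>)
      also have "\<dots> = harm n / (sq * sq)" by (simp add: sq_def)
      also have "\<dots> \<le> 4 * sq / (sq * sq)"
        using harm_bnd[of n] sq1 by (intro divide_right_mono) (auto simp: sq_def)
      also have "\<dots> = 4 / sq" using sq1 by simp
      finally show ?thesis .
    qed
    have hB: "\<bar>Bs\<bar> \<le> 1 / sq"
    proof -
      have "\<bar>Bs\<bar> \<le> 1 / real (Suc n)"
        unfolding Bs_def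
        by (rule alt_tail[where a="\<lambda>m. 1 / real m"]) (use n in \<open>auto simp: frac_le\<close>)
      also have "\<dots> = 1 / (sq * sq)" by (simp add: sq_def)
      also have "\<dots> \<le> 1 / sq" using sq1 by (simp add: divide_le_eq)
      finally show ?thesis .
    qed
    have hE: "\<bar>E\<bar> \<le> 4 * C / sq"
      unfolding E_def sq_def
    proof (rule tail32[OF _ n])
      fix m :: nat assume m: "m \<ge> 1"
      have "\<bar>K' (m - 1) - \<kappa>'\<bar> \<le> C / sqrt (real m)" using C[of "m - 1"] m by (simp add: of_nat_diff)
      then have "\<bar>K' (m - 1) - \<kappa>'\<bar> / real m \<le> C / sqrt (real m) / real m"
        using m by (intro divide_right_mono) auto
      then show "\<bar>(-1) ^ m * ((K' (m - 1) - \<kappa>') / real m)\<bar> \<le> C / (real m * sqrt (real m))"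
        by (simp add: abs_mult abs_divide mult.commute)
    qed
    have "\<bar>lam * A + \<kappa>' * Bs + E\<bar> \<le> \<bar>lam\<bar> * \<bar>A\<bar> + \<bar>\<kappa>'\<bar> * \<bar>Bs\<bar> + \<bar>E\<bar>"
    proof -
      have "\<bar>lam * A + \<kappa>' * Bs + E\<bar> \<le> \<bar>lam * A\<bar> + \<bar>\<kappa>' * Bs\<bar> + \<bar>E\<bar>" by linarith
      then show ?thesis by (simp add: abs_mult)
    qed
    also have "\<dots> \<le> \<bar>lam\<bar> * (4 / sq) + \<bar>\<kappa>'\<bar> * (1 / sq) + 4 * C / sq"
      using hA hB hE by (intro add_mono mult_left_mono) auto
    also have "\<dots> = (4 * \<bar>lam\<bar> + \<bar>\<kappa>'\<bar> + 4 * C) / sq" by (simp add: add_divide_distrib)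
    finally show "\<bar>(\<Sum>m=1..N. zsgn s ^ m / real m ^ fst s * K (m - 1)) - (\<Sum>m=1..n. zsgn s ^ m / real m ^ fst s * K (m - 1))\<bar>
        \<le> (4 * \<bar>lam\<bar> + \<bar>\<kappa>'\<bar> + 4 * C) / sqrt (real n + 1)"
      unfolding split sq_def .
  qed
qed




lemma HL: "(\<lambda>M. harm M - (ln (real M) + euler_mascheroni)) \<longlonglongrightarrow> (0::real)"
proof -
  have "(\<lambda>M. (harm M - ln (real M)) - euler_mascheroni) \<longlonglongrightarrow> (euler_mascheroni - euler_mascheroni :: real)"
    by (intro tendsto_diff euler_mascheroni_LIMSEQ tendsto_const)
  then show ?thesis by (simp add: algebra_simps)
qed

lemma HL_bound:
  assumes "n \<ge> 1"
  shows "\<bar>harm n - (ln (real n) + euler_mascheroni)\<bar> \<le> 2 / real n"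
proof -
  have b: "euler_mascheroni \<in> {harm n - ln (real (Suc n)) + inverse (real (2*(n+1))) .. harm n - ln (real (Suc n)) + inverse (real (2*n))}"
    using euler_mascheroni_bounds[OF assms] by simp
  have l1: "ln (real (Suc n)) - ln (real n) \<le> 1 / real n"
  proof -
    have e: "1 + 1 / real n = real (Suc n) / real n" using assms by (simp add: field_simps)
    have "ln (real (Suc n) / real n) = ln (real (Suc n)) - ln (real n)"
      by (rule ln_divide_pos) (use assms in auto)
    then have "ln (real (Suc n)) - ln (real n) = ln (1 + 1 / real n)" using e by simp
    also have "\<dots> \<le> 1 / real n" by (rule ln_add_one_self_le_self) simp
    finally show ?thesis .
  qed
  have l0: "ln (real (Suc n)) - ln (real n) \<ge> 0" using assms by simp
  have i1: "inverse (real (2*n)) \<le> 1 / real n" using assms by (simp add: field_simps)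
  have i0: "inverse (real (2*(n+1))) \<ge> 0" by simp
  have b1: "harm n - ln (real (Suc n)) + inverse (real (2*(n+1))) \<le> euler_mascheroni"
    and b2: "euler_mascheroni \<le> harm n - ln (real (Suc n)) + inverse (real (2*n))"
    using b unfolding atLeastAtMost_iff by auto
  have i2: "1 / real n \<le> 2 / real n" using assms by (simp add: divide_right_mono)
  have u: "harm n - (ln (real n) + euler_mascheroni) \<le> 2 / real n" using b1 l1 i0 i2 by linarith
  have d: "- (2 / real n) \<le> harm n - (ln (real n) + euler_mascheroni)" using b2 l0 i1 i2 by linarith
  show ?thesis using u d by linarith
qed

lemma HL2: "(\<lambda>M. (harm M)\<^sup>2 - (ln (real M) + euler_mascheroni)\<^sup>2) \<longlonglongrightarrow> (0::real)"
proof (rule Lim_null_comparison)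
  define g where "g M = (2 / real M) * (2 + 2 * ln (real M) + 2 * euler_mascheroni)" for M :: nat
  show "\<forall>\<^sub>F M in sequentially. norm ((harm M)\<^sup>2 - (ln (real M) + euler_mascheroni)\<^sup>2) \<le> g M"
    unfolding eventually_sequentially
  proof (intro exI[of _ 1] allI impI)
    fix M :: nat assume M: "M \<ge> 1"
    define H where "H = (harm M :: real)"
    define L where "L = ln (real M) + euler_mascheroni"
    have hl: "\<bar>H - L\<bar> \<le> 2 / real M" using HL_bound[OF M] by (simp add: H_def L_def)
    have L0: "L \<ge> 0" using M euler_mascheroni_pos by (simp add: L_def)
    have "2 / real M \<le> 2" using M by (simp add: divide_le_eq)
    then have hl1: "\<bar>H - L\<bar> \<le> 2" using hl by linarith
    have "\<bar>H + L\<bar> \<le> 2 + 2 * L" using hl1 L0 by linarith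
    have "H\<^sup>2 - L\<^sup>2 = (H - L) * (H + L)" by (simp add: power2_eq_square algebra_simps)
    then have "\<bar>H\<^sup>2 - L\<^sup>2\<bar> = \<bar>H - L\<bar> * \<bar>H + L\<bar>" by (simp add: abs_mult)
    also have "\<dots> \<le> (2 / real M) * (2 + 2 * L)"
      using hl \<open>\<bar>H + L\<bar> \<le> 2 + 2 * L\<close> by (intro mult_mono) auto
    finally show "norm ((harm M)\<^sup>2 - (ln (real M) + euler_mascheroni)\<^sup>2) \<le> g M"
      by (simp add: g_def H_def L_def algebra_simps)
  qed
  have "(\<lambda>M. 4 * (1 + euler_mascheroni) * (1 / real M) + 4 * (ln (real M) / real M)) \<longlonglongrightarrow> 4 * (1 + euler_mascheroni) * 0 + 4 * 0"
    by (intro tendsto_intros lim_ln_over_n lim_const_over_n)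
  moreover have "(\<lambda>M. 4 * (1 + euler_mascheroni) * (1 / real M) + 4 * (ln (real M) / real M)) = g"
    by (auto simp: g_def fun_eq_iff algebra_simps)
  ultimately show "g \<longlonglongrightarrow> 0" by simp
qed




lemma zt_fun: "zeta_trunc (s # ss) = (\<lambda>N. \<Sum>n=1..N. zsgn s ^ n / real n ^ fst s * zeta_trunc ss (n - 1))"
  by (rule ext) simp

lemma zt1: "zeta_trunc [(1, False)] N = harm N"
  by (simp add: harm_def zsgn_def inverse_eq_divide)

lemma decomp1:
  "zeta_trunc ((1, False) # ss) m = \<kappa> * harm m + (\<Sum>n=1..m. (zeta_trunc ss (n - 1) - \<kappa>) / real n)"
proof -
  have "zeta_trunc ((1, False) # ss) m = (\<Sum>n=1..m. \<kappa> / real n + (zeta_trunc ss (n - 1) - \<kappa>) / real n)"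
    by (simp add: zsgn_def diff_divide_distrib)
  also have "\<dots> = \<kappa> * harm m + (\<Sum>n=1..m. (zeta_trunc ss (n - 1) - \<kappa>) / real n)"
    by (simp add: sum.distrib harm_def sum_distrib_left inverse_eq_divide)
  finally show ?thesis .
qed

lemma V_id: "zeta_trunc [(1, False), (1, False)] N = ((harm N)\<^sup>2 - zeta_trunc [(2, False)] N) / 2"
proof (induction N)
  case 0 then show ?case by (simp add: harm_def)
next
  case (Suc N)
  have a: "zeta_trunc [(1, False), (1, False)] (Suc N) = zeta_trunc [(1, False), (1, False)] N + harm N / real (Suc N)"
    using zeta_trunc_Suc[of "(1,False)" "[(1,False)]" N] unfolding zt1 by (simp add: zsgn_def del: zeta_trunc.simps)
  have b: "zeta_trunc [(2, False)] (Suc N) = zeta_trunc [(2, False)] N + 1 / (real (Suc N))\<^sup>2"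
    using zeta_trunc_Suc[of "(2,False)" "[]" N] by (simp add: zsgn_def del: zeta_trunc.simps(2))
  have c: "harm (Suc N) = harm N + 1 / real (Suc N)" by (simp add: harm_Suc inverse_eq_divide)
  have gen: "\<And>h Z x :: real. x \<noteq> 0 \<Longrightarrow>
      (h\<^sup>2 - Z) / 2 + h / x = ((h + 1 / x)\<^sup>2 - (Z + 1 / x\<^sup>2)) / 2"
    by (simp add: field_simps power2_eq_square)
  show ?case unfolding a b c Suc by (rule gen) simp
qed





lemma rate_const: "rate (\<lambda>_. c) c"
  by (auto simp: rate_def intro!: exI[of _ 0])

lemma shuffle_rep:
  assumes "\<forall>s\<in>set ss. sidx_ok s" "0 < e" "e < 1"
  shows "iter_int (forms ss) (1 - e) = e * (\<Sum>N. zeta_trunc ss N * (1 - e) ^ N)"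
  using iter_forms_main[OF assms(1), of "1 - e"] assms by simp

lemma summ_zeta:
  assumes "\<forall>s\<in>set ss. sidx_ok s" "0 < e" "e < 1"
  shows "summable (\<lambda>N. zeta_trunc ss N * (1 - e) ^ N)"
  by (rule rad_summable[OF rad_zeta[OF assms(1)]]) (use assms in auto)

lemma ok1: "\<forall>s\<in>set [(1::nat, False)]. sidx_ok s" by (simp add: sidx_ok_def)
lemma ok11: "\<forall>s\<in>set [(1::nat, False), (1, False)]. sidx_ok s" by (simp add: sidx_ok_def)

lemma case_quad:
  assumes ok: "\<forall>s\<in>set ss. sidx_ok s"
    and dec: "\<And>N. zeta_trunc ss N = \<kappa> * zeta_trunc [(1, False), (1, False)] N + j * harm N + D N"
    and D: "D \<longlonglongrightarrow> d" and Z2: "zeta_trunc [(2, False)] \<longlonglongrightarrow> z2"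
  shows "zeta_star ss = [:d - \<kappa> * z2 / 2, j, \<kappa> / 2:]" and "zeta_sh ss = [:d, j, \<kappa> / 2:]"
proof -
  show "zeta_star ss = [:d - \<kappa> * z2 / 2, j, \<kappa> / 2:]"
  proof (rule zeta_star_eq)
    define L where "L M = ln (real M) + euler_mascheroni" for M :: nat
    have e: "zeta_trunc ss M - poly [:d - \<kappa> * z2 / 2, j, \<kappa> / 2:] (L M) =
        \<kappa> * ((((harm M)\<^sup>2 - (L M)\<^sup>2) - (zeta_trunc [(2, False)] M - z2)) / 2) + j * (harm M - L M) + (D M - d)" for M
      unfolding dec V_id by (simp add: power2_eq_square algebra_simps add_divide_distrib diff_divide_distrib)
    have "(\<lambda>M. \<kappa> * ((((harm M)\<^sup>2 - (L M)\<^sup>2) - (zeta_trunc [(2, False)] M - z2)) / 2) + j * (harm M - L M) + (D M - d))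
        \<longlonglongrightarrow> \<kappa> * (((0 - (z2 - z2)) / 2)) + j * 0 + (d - d)"
      unfolding L_def by (intro tendsto_intros HL HL2 Z2 D) simp_all
    moreover have "(\<lambda>M. zeta_trunc ss M - poly [:d - \<kappa> * z2 / 2, j, \<kappa> / 2:] (L M)) =
        (\<lambda>M. \<kappa> * ((((harm M)\<^sup>2 - (L M)\<^sup>2) - (zeta_trunc [(2, False)] M - z2)) / 2) + j * (harm M - L M) + (D M - d))"
      by (rule ext) (rule e)
    ultimately show "(\<lambda>M. zeta_trunc ss M - poly [:d - \<kappa> * z2 / 2, j, \<kappa> / 2:] (ln (real M) + euler_mascheroni)) \<longlonglongrightarrow> 0"
      unfolding L_def by simp
  qed
  show "zeta_sh ss = [:d, j, \<kappa> / 2:]"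
  proof (rule zeta_sh_eq)
    have ev: "\<forall>\<^sub>F e in at_right 0. e * (\<Sum>N. D N * (1 - e) ^ N) - d =
        iter_int (forms ss) (1 - e) - poly [:d, j, \<kappa> / 2:] (- ln e)"
      unfolding eventually_at_right_field
    proof (intro exI[of _ 1] conjI allI impI)
      fix e :: real assume e: "0 < e" "e < 1"
      define x where "x = 1 - e"
      have sG: "summable (\<lambda>N. zeta_trunc ss N * x ^ N)" unfolding x_def by (rule summ_zeta[OF ok e])
      have sV: "summable (\<lambda>N. zeta_trunc [(1, False), (1, False)] N * x ^ N)"
        unfolding x_def by (rule summ_zeta[OF ok11 e])
      have sH: "summable (\<lambda>N. zeta_trunc [(1, False)] N * x ^ N)"
        unfolding x_def by (rule summ_zeta[OF ok1 e])
      have Deq: "(\<lambda>N. D N * x ^ N) = (\<lambda>N. zeta_trunc ss N * x ^ N - \<kappa> * (zeta_trunc [(1, False), (1, False)] N * x ^ N)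
          - j * (zeta_trunc [(1, False)] N * x ^ N))"
        unfolding dec zt1 by (auto simp: fun_eq_iff algebra_simps simp del: zeta_trunc.simps)
      have "(\<Sum>N. D N * x ^ N) = (\<Sum>N. zeta_trunc ss N * x ^ N) - \<kappa> * (\<Sum>N. zeta_trunc [(1, False), (1, False)] N * x ^ N)
          - j * (\<Sum>N. zeta_trunc [(1, False)] N * x ^ N)"
      proof -
        have "(\<lambda>N. zeta_trunc ss N * x ^ N - \<kappa> * (zeta_trunc [(1, False), (1, False)] N * x ^ N)
          - j * (zeta_trunc [(1, False)] N * x ^ N)) sums ((\<Sum>N. zeta_trunc ss N * x ^ N) - \<kappa> * (\<Sum>N. zeta_trunc [(1, False), (1, False)] N * x ^ N)
          - j * (\<Sum>N. zeta_trunc [(1, False)] N * x ^ N))"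
          by (intro sums_diff sums_mult summable_sums sG sV sH)
        then show ?thesis unfolding Deq by (rule sums_unique[symmetric])
      qed
      then have "e * (\<Sum>N. D N * x ^ N) = iter_int (forms ss) (1 - e) - \<kappa> * iter_int (forms [(1, False), (1, False)]) (1 - e)
          - j * iter_int (forms [(1, False)]) (1 - e)"
      proof -
        assume h: "(\<Sum>N. D N * x ^ N) = (\<Sum>N. zeta_trunc ss N * x ^ N) - \<kappa> * (\<Sum>N. zeta_trunc [(1, False), (1, False)] N * x ^ N)
          - j * (\<Sum>N. zeta_trunc [(1, False)] N * x ^ N)"
        define SG where "SG = (\<Sum>N. zeta_trunc ss N * x ^ N)"
        define SV where "SV = (\<Sum>N. zeta_trunc [(1, False), (1, False)] N * x ^ N)"
        define SH where "SH = (\<Sum>N. zeta_trunc [(1, False)] N * x ^ N)"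
        have i1: "iter_int (forms ss) (1 - e) = e * SG" using shuffle_rep[OF ok e] unfolding SG_def x_def .
        have i2: "iter_int (forms [(1, False), (1, False)]) (1 - e) = e * SV"
          using shuffle_rep[OF ok11 e] unfolding SV_def x_def .
        have i3: "iter_int (forms [(1, False)]) (1 - e) = e * SH"
          using shuffle_rep[OF ok1 e] unfolding SH_def x_def .
        show ?thesis unfolding i1 i2 i3 h[folded SG_def SV_def SH_def] by (simp add: algebra_simps)
      qed
      also have "\<dots> = iter_int (forms ss) (1 - e) - \<kappa> * ((ln e)\<^sup>2 / 2) - j * (- ln e)"
        using int1[of "1 - e"] int11[of "1 - e"] e by simp
      finally show "e * (\<Sum>N. D N * (1 - e) ^ N) - d = iter_int (forms ss) (1 - e) - poly [:d, j, \<kappa> / 2:] (- ln e)"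
        unfolding x_def by (simp add: power2_eq_square algebra_simps)
    qed simp
    have "((\<lambda>e. e * (\<Sum>N. D N * (1 - e) ^ N) - d) \<longlongrightarrow> d - d) (at_right 0)"
      by (intro tendsto_diff abel_lim D tendsto_const)
    then show "((\<lambda>e. iter_int (forms ss) (1 - e) - poly [:d, j, \<kappa> / 2:] (- ln e)) \<longlongrightarrow> 0) (at_right 0)"
      using tendsto_cong[OF ev] by simp
  qed
qed




lemma decomp0: "zeta_trunc ((1, False) # ss) m = (\<Sum>n=1..m. zeta_trunc ss (n - 1) / real n)"
  by (simp add: zsgn_def)

lemma harm_sum: "(\<Sum>n=1..m. c / real n) = c * harm m"
  by (simp add: harm_def sum_distrib_left inverse_eq_divide)

lemma rate_d1:
  assumes "sidx_ok c" "c \<noteq> (1, False)"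
  shows "\<exists>\<kappa>. rate (zeta_trunc [c]) \<kappa>"
proof (cases "fst c \<ge> 2")
  case True
  have "\<exists>\<sigma>. rate (\<lambda>N. \<Sum>n=1..N. zsgn c ^ n / real n ^ fst c * (\<lambda>_. 1::real) (n - 1)) \<sigma>"
    by (rule step_big[OF True, of _ 1]) simp
  then show ?thesis unfolding zt_fun[of c "[]"] zeta_trunc.simps(1) by simp
next
  case False
  then have c: "c = (1, True)" using assms by (cases c) (auto simp: sidx_ok_def)
  have "\<exists>\<sigma>. rate (\<lambda>N. \<Sum>n=1..N. zsgn c ^ n / real n ^ fst c * (\<lambda>_. 1::real) (n - 1)) \<sigma>"
    by (rule step_alt[OF c rate_const, of _ 0]) simp
  then show ?thesis unfolding zt_fun[of c "[]"] zeta_trunc.simps(1) by simp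
qed

lemma rate_d2:
  assumes "sidx_ok b" "sidx_ok c" "b \<noteq> (1, False)" "b = (1, True) \<Longrightarrow> c \<noteq> (1, False)"
  shows "\<exists>\<kappa>. rate (zeta_trunc [b, c]) \<kappa>"
proof (cases "fst b \<ge> 2")
  case True
  have "\<exists>\<sigma>. rate (\<lambda>N. \<Sum>n=1..N. zsgn b ^ n / real n ^ fst b * zeta_trunc [c] (n - 1)) \<sigma>"
    by (rule step_big[OF True zeta_bnd2]) (use assms in auto)
  then show ?thesis unfolding zt_fun[of b "[c]"] .
next
  case False
  then have b: "b = (1, True)" using assms by (cases b) (auto simp: sidx_ok_def)
  obtain \<kappa>' where k: "rate (zeta_trunc [c]) \<kappa>'" using rate_d1[OF assms(2) assms(4)[OF b]] by blast
  have "\<exists>\<sigma>. rate (\<lambda>N. \<Sum>n=1..N. zsgn b ^ n / real n ^ fst b * zeta_trunc [c] (n - 1)) \<sigma>"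
    by (rule step_alt[OF b k, of _ 0]) simp
  then show ?thesis unfolding zt_fun[of b "[c]"] .
qed

lemma conv_case1:
  assumes ok: "sidx_ok a" "sidx_ok b" "sidx_ok c" and na: "a \<noteq> (1, False)" and w: "fst a + fst b + fst c \<ge> 4"
  shows "\<exists>g. zeta_trunc [a, b, c] \<longlonglongrightarrow> g"
proof -
  have "\<exists>\<sigma>. rate (zeta_trunc [a, b, c]) \<sigma>"
  proof (cases "fst a \<ge> 2")
    case True
    have "\<exists>\<sigma>. rate (\<lambda>N. \<Sum>n=1..N. zsgn a ^ n / real n ^ fst a * zeta_trunc [b, c] (n - 1)) \<sigma>"
      by (rule step_big[OF True zeta_bnd2]) (use ok in auto)
    then show ?thesis unfolding zt_fun[of a "[b, c]"] .
  next
    case False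
    then have a: "a = (1, True)" using ok na by (cases a) (auto simp: sidx_ok_def)
    show ?thesis
    proof (cases "b = (1, False)")
      case False
      have "b = (1, True) \<Longrightarrow> c \<noteq> (1, False)" using w a by auto
      then obtain \<kappa> where k: "rate (zeta_trunc [b, c]) \<kappa>" using rate_d2[OF ok(2,3) False] by blast
      have "\<exists>\<sigma>. rate (\<lambda>N. \<Sum>n=1..N. zsgn a ^ n / real n ^ fst a * zeta_trunc [b, c] (n - 1)) \<sigma>"
        by (rule step_alt[OF a k, of _ 0]) simp
      then show ?thesis unfolding zt_fun[of a "[b, c]"] .
    next
      case True
      have "c \<noteq> (1, False)" using w a True by auto
      then obtain \<kappa> where k: "rate (zeta_trunc [c]) \<kappa>" using rate_d1[OF ok(3)] by blast
      obtain j where J: "rate (\<lambda>N. \<Sum>n=1..N. (zeta_trunc [c] (n - 1) - \<kappa>) / real n) j"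
        using rate_D[OF k] by blast
      have "\<exists>\<sigma>. rate (\<lambda>N. \<Sum>n=1..N. zsgn a ^ n / real n ^ fst a * zeta_trunc [b, c] (n - 1)) \<sigma>"
        by (rule step_alt[OF a J, of _ \<kappa>]) (simp only: True decomp1[of "[c]" _ \<kappa>])
      then show ?thesis unfolding zt_fun[of a "[b, c]"] .
    qed
  qed
  then show ?thesis using rate_lim by blast
qed

lemma dec_case3:
  fixes J D :: "nat \<Rightarrow> real"
  assumes J: "J = (\<lambda>N. \<Sum>n=1..N. (zeta_trunc [c] (n - 1) - \<kappa>) / real n)"
    and D: "D = (\<lambda>N. \<Sum>n=1..N. (J (n - 1) - j) / real n)"
  shows "zeta_trunc [(1, False), (1, False), c] N = \<kappa> * zeta_trunc [(1, False), (1, False)] N + j * harm N + D N"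
proof -
  have "zeta_trunc [(1, False), (1, False), c] N = (\<Sum>n=1..N. zeta_trunc [(1, False), c] (n - 1) / real n)"
    by (rule decomp0)
  also have "\<dots> = (\<Sum>n=1..N. \<kappa> * (harm (n - 1) / real n) + (j / real n + (J (n - 1) - j) / real n))"
  proof (intro sum.cong refl)
    fix n
    have "zeta_trunc [(1, False), c] (n - 1) = \<kappa> * harm (n - 1) + J (n - 1)"
      unfolding J by (rule decomp1)
    then show "zeta_trunc [(1, False), c] (n - 1) / real n = \<kappa> * (harm (n - 1) / real n) + (j / real n + (J (n - 1) - j) / real n)"
      by (simp add: add_divide_distrib diff_divide_distrib)
  qed
  also have "\<dots> = \<kappa> * (\<Sum>n=1..N. harm (n - 1) / real n) + j * harm N + D N"
    unfolding sum.distrib harm_sum D sum_distrib_left[symmetric] by simp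
  also have "(\<Sum>n=1..N. harm (n - 1) / real n) = zeta_trunc [(1, False), (1, False)] N"
    unfolding decomp0[of "[(1, False)]"] zt1 ..
  finally show ?thesis .
qed




theorem lemma5p1:
  fixes a b c :: sidx and w :: nat
  assumes "sidx_ok a" and "sidx_ok b" and "sidx_ok c"
    and "w = fst a + fst b + fst c" and "w \<ge> 4"
  shows "(\<not> (a = (1, False) \<and> b = (1, False)) \<longrightarrow> zeta_sh [a, b, c] = zeta_star [a, b, c])
    \<and> (a = (1, False) \<and> b = (1, False) \<and> (c = (w - 2, False) \<or> c = (w - 2, True)) \<longrightarrow>
         zeta_sh [a, b, c] = zeta_star [a, b, c]
           + [: 1 / 2 * euler_sum [(2, False)] * euler_sum [c] :])"
proof -
  have ok: "\<forall>s\<in>set [a, b, c]. sidx_ok s" using assms by simp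
  have w4: "fst a + fst b + fst c \<ge> 4" using assms by simp
  obtain z2 where Z2: "rate (zeta_trunc [(2, False)]) z2" using rate_d1[of "(2, False)"] by (auto simp: sidx_ok_def)
  have Z2l: "zeta_trunc [(2, False)] \<longlonglongrightarrow> z2" by (rule rate_lim[OF Z2])
  have e2: "euler_sum [(2, False)] = z2" unfolding euler_sum_def by (rule limI[OF Z2l])
  show ?thesis
  proof (intro conjI impI)
    assume nab: "\<not> (a = (1, False) \<and> b = (1, False))"
    show "zeta_sh [a, b, c] = zeta_star [a, b, c]"
    proof (cases "a = (1, False)")
      case False
      obtain g where g: "zeta_trunc [a, b, c] \<longlonglongrightarrow> g" using conv_case1[OF assms(1-3) False w4] by blast
      have dec: "zeta_trunc [a, b, c] N = 0 * zeta_trunc [(1, False), (1, False)] N + 0 * harm N + zeta_trunc [a, b, c] N" for N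
        by simp
      show ?thesis using case_quad[OF ok dec g Z2l] by simp
    next
      case True
      then have nb: "b \<noteq> (1, False)" using nab by simp
      have "b = (1, True) \<Longrightarrow> c \<noteq> (1, False)" using w4 True by auto
      then obtain \<kappa> where k: "rate (zeta_trunc [b, c]) \<kappa>" using rate_d2[OF assms(2,3) nb] by blast
      obtain d where D: "rate (\<lambda>N. \<Sum>n=1..N. (zeta_trunc [b, c] (n - 1) - \<kappa>) / real n) d"
        using rate_D[OF k] by blast
      have dec: "zeta_trunc [a, b, c] N = 0 * zeta_trunc [(1, False), (1, False)] N + \<kappa> * harm N
          + (\<Sum>n=1..N. (zeta_trunc [b, c] (n - 1) - \<kappa>) / real n)" for N
        unfolding True using decomp1[of "[b, c]" N \<kappa>] by simp
      show ?thesis using case_quad[OF ok dec rate_lim[OF D] Z2l] by simp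
    qed
  next
    assume h: "a = (1, False) \<and> b = (1, False) \<and> (c = (w - 2, False) \<or> c = (w - 2, True))"
    then have a: "a = (1, False)" and b: "b = (1, False)" by auto
    have c2: "fst c \<ge> 2" using w4 a b by simp
    then have nc: "c \<noteq> (1, False)" by auto
    obtain \<kappa> where k: "rate (zeta_trunc [c]) \<kappa>" using rate_d1[OF assms(3) nc] by blast
    have ec: "euler_sum [c] = \<kappa>" unfolding euler_sum_def by (rule limI[OF rate_lim[OF k]])
    define J where "J = (\<lambda>N. \<Sum>n=1..N. (zeta_trunc [c] (n - 1) - \<kappa>) / real n)"
    obtain j where Jr: "rate J j" using rate_D[OF k] unfolding J_def by blast
    define D where "D = (\<lambda>N. \<Sum>n=1..N. (J (n - 1) - j) / real n)"
    obtain d where Dr: "rate D d" using rate_D[OF Jr] unfolding D_def by blast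
    have dec: "zeta_trunc [a, b, c] N = \<kappa> * zeta_trunc [(1, False), (1, False)] N + j * harm N + D N" for N
      unfolding a b by (rule dec_case3[OF J_def D_def])
    note CQ = case_quad[OF ok dec rate_lim[OF Dr] Z2l]
    show "zeta_sh [a, b, c] = zeta_star [a, b, c] + [: 1 / 2 * euler_sum [(2, False)] * euler_sum [c] :]"
      unfolding CQ e2 ec by simp
  qed
qed


end
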